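(* For $i=1,2$ let $F_i$ be a field of characteristic different from $2$, let $a_i\in F_i^\times\setminus F_i^{\times 2}$, $K_i=F_i(\sqrt{a_i})$, $G_i=\mathrm{Gal}(K_i/F_i)$, and $T_i=K_i^\times/K_i^{\times 2}$. Let $G$ be a group of order $2$ and regard each $T_i$ as an $\mathbb{F}_2[G]$-module via the isomorphism $G\to G_i$. Let $\Upsilon(K_i)=1$ if $-1\in N(K_i^\times)$ and $\Upsilon(K_i)=0$ otherwise. Then $T_1\cong T_2$ as $\mathbb{F}_2[G]$-modules if and only if both of the following hold: (1) $2\Upsilon(K_1)+\dim_{\mathbb{F}_2}F_1^\times/N(K_1^\times) = 2\Upsilon(K_2)+\dim_{\mathbb{F}_2}F_2^\times/N(K_2^\times)$; (2) $\Upsilon(K_2)+\dim_{\mathbb{F}_2}N(K_1^\times)/F_1^{\times 2} = \Upsilon(K_1)+\dim_{\mathbb{F}_2}N(K_2^\times)/F_2^{\times 2}$.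
   Context: $N(K_i^\times)\subseteq F_i^\times$ denotes the group of norms from $K_i$ to $F_i$; it contains $F_i^{\times 2}$. Dimensions are as $\mathbb{F}_2$-vector spaces (cardinal numbers). *)

theory Defs
  imports Main "HOL-Library.Set_Algebras" "HOL-Library.Equipollence"
begin

definition units_of_field :: "'a::field set" where
  "units_of_field = {x. x \<noteq> 0}"

definition squares_of_field :: "'a::field set" where
  "squares_of_field = {x * x | x. x \<noteq> 0}"

text \<open>Quotient U/H as the set of cosets x H (x in U); cosets multiply via Set_Algebras.\<close>
definition quot :: "'a::times set \<Rightarrow> 'a set \<Rightarrow> 'a set set" where
  "quot U H = (\<lambda>x. x *o H) ` U"

text \<open>B is an F_2-basis of the elementary abelian 2-group Q (with neutral element H):
  every element of Q is the product of a unique finite subset of B.\<close>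
definition F2_basis :: "'a::comm_monoid_mult set \<Rightarrow> 'a set set \<Rightarrow> 'a set set \<Rightarrow> bool" where
  "F2_basis H Q B \<longleftrightarrow> B \<subseteq> Q \<and> bij_betw (\<lambda>X. H * \<Prod>X) {X. finite X \<and> X \<subseteq> B} Q"

text \<open>K = F(sqrt a) via the field embedding iota and a square root r of iota a.\<close>
definition quad_ext :: "('a::field \<Rightarrow> 'k::field) \<Rightarrow> 'a \<Rightarrow> 'k \<Rightarrow> bool" where
  "quad_ext \<iota> a r \<longleftrightarrow>
     (\<forall>x y. \<iota> (x + y) = \<iota> x + \<iota> y) \<and> (\<forall>x y. \<iota> (x * y) = \<iota> x * \<iota> y) \<and> \<iota> 1 = 1 \<and>
     r * r = \<iota> a \<and> (\<forall>z. \<exists>x y. z = \<iota> x + \<iota> y * r)"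

definition gal_generator :: "('a::field \<Rightarrow> 'k::field) \<Rightarrow> ('k \<Rightarrow> 'k) \<Rightarrow> bool" where
  "gal_generator \<iota> \<sigma> \<longleftrightarrow> bij \<sigma> \<and> (\<forall>x y. \<sigma> (x + y) = \<sigma> x + \<sigma> y) \<and>
     (\<forall>x y. \<sigma> (x * y) = \<sigma> x * \<sigma> y) \<and> (\<forall>x. \<sigma> (\<iota> x) = \<iota> x) \<and> \<sigma> \<noteq> id"

text \<open>The norm group N(K^x), a subset of F^x; for K/F quadratic, N(z) = z * sigma z.\<close>
definition norm_group :: "('a::field \<Rightarrow> 'k::field) \<Rightarrow> ('k \<Rightarrow> 'k) \<Rightarrow> 'a set" where
  "norm_group \<iota> \<sigma> = {x. \<exists>z. z \<noteq> 0 \<and> \<iota> x = z * \<sigma> z}"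

definition Upsilon :: "('a::field \<Rightarrow> 'k::field) \<Rightarrow> ('k \<Rightarrow> 'k) \<Rightarrow> nat" where
  "Upsilon \<iota> \<sigma> = (if (-1::'a) \<in> norm_group \<iota> \<sigma> then 1 else 0)"

text \<open>T = K^x / K^x2 with G acting through sigma; an F_2[G]-module isomorphism is a
  group isomorphism commuting with the action of the generator.\<close>
definition T_mod_iso :: "('k::field \<Rightarrow> 'k) \<Rightarrow> ('l::field \<Rightarrow> 'l) \<Rightarrow> bool" where
  "T_mod_iso \<sigma>1 \<sigma>2 \<longleftrightarrow>
     (\<exists>f. bij_betw f (quot (units_of_field::'k set) squares_of_field)
                     (quot (units_of_field::'l set) squares_of_field) \<and>
          (\<forall>A \<in> quot (units_of_field::'k set) squares_of_field.
           \<forall>B \<in> quot (units_of_field::'k set) squares_of_field. f (A * B) = f A * f B) \<and>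
          (\<forall>A \<in> quot (units_of_field::'k set) squares_of_field. f (\<sigma>1 ` A) = \<sigma>2 ` f A))"

end

theory Submission
  imports Defs "HOL-Library.Z2" "HOL.Vector_Spaces" "HOL-Algebra.Free_Abelian_Groups"
begin

class f2 = ab_group_add + assumes add_self: "x + x = 0"

lemma f2_neg [simp]: "- (x::'v::f2) = x"
  by (metis add_self add.inverse_unique)

lemma f2_diff [simp]: "(x::'v::f2) - y = x + y"
  by (simp add: diff_conv_add_uminus)

lemma f2_add_self_left [simp]: "(x::'v::f2) + (x + y) = y"
  by (metis add.assoc add_self add_0)

lemma f2_eq_iff: "((x::'v::f2) + y = 0) = (x = y)"
  by (metis add_self f2_add_self_left add_0_right)

definition sc :: "bit \<Rightarrow> 'v::f2 \<Rightarrow> 'v" where "sc b x = (if b = 0 then 0 else x)"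

lemma bit_cases2: "(b::bit) = 0 \<or> b = 1" by (cases b) auto

interpretation f2: vector_space "sc :: bit \<Rightarrow> 'v::f2 \<Rightarrow> 'v"
  apply unfold_locales
  using bit_cases2 by (auto simp: sc_def add_self)

interpretation f2p: vector_space_pair "sc :: bit \<Rightarrow> 'v::f2 \<Rightarrow> 'v" "sc :: bit \<Rightarrow> 'w::f2 \<Rightarrow> 'w"
  by unfold_locales

lemma lin_iff: "Vector_Spaces.linear sc sc (f :: 'v::f2 \<Rightarrow> 'w::f2) \<longleftrightarrow> (\<forall>x y. f (x + y) = f x + f y)"
proof -
  have key: "f (sc c x) = sc c (f x)" if "\<forall>x y. f (x + y) = f x + f y" for c x
  proof -
    have "f 0 = 0" using that[rule_format, of 0 0] by simp
    then show ?thesis by (simp add: sc_def)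
  qed
  then show ?thesis
  proof -
    have "vector_space (sc::bit\<Rightarrow>'v\<Rightarrow>'v)" "vector_space (sc::bit\<Rightarrow>'w\<Rightarrow>'w)"
      by (rule f2.vector_space_axioms)+
    with key show ?thesis unfolding Vector_Spaces.linear_iff by blast
  qed
qed

lemma span_f2: "f2.span (S::'v::f2 set) = {\<Sum>X | X. finite X \<and> X \<subseteq> S}"
proof (intro Set.set_eqI iffI)
  fix y assume "y \<in> f2.span S"
  then obtain t r where y: "y = (\<Sum>a\<in>t. sc (r a) a)" "finite t" "t \<subseteq> S"
    unfolding f2.span_explicit by blast
  have "(\<Sum>a\<in>{a\<in>t. r a \<noteq> 0}. a) = (\<Sum>a\<in>t. if r a \<noteq> 0 then a else 0)"
    using y(2) by (rule sum.inter_filter)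
  also have "\<dots> = (\<Sum>a\<in>t. sc (r a) a)" by (auto simp: sc_def intro!: sum.cong)
  finally have "(\<Sum>a\<in>t. sc (r a) a) = (\<Sum>a\<in>{a\<in>t. r a \<noteq> 0}. a)" by simp
  then show "y \<in> {\<Sum>X | X. finite X \<and> X \<subseteq> S}" using y by auto
next
  fix y assume "y \<in> {\<Sum>X | X. finite X \<and> X \<subseteq> S}"
  then obtain X where X: "y = \<Sum>X" "finite X" "X \<subseteq> S" by blast
  have "y = (\<Sum>a\<in>X. sc ((\<lambda>_. 1) a) a)" using X by (simp add: sc_def)
  then show "y \<in> f2.span S" unfolding f2.span_explicit using X
    by (intro CollectI exI[of _ X] exI[of _ "\<lambda>_. 1"]) auto
qed

lemma indep_sum0: "f2.independent (S::'v::f2 set) \<Longrightarrow> finite X \<Longrightarrow> X \<subseteq> S \<Longrightarrow> \<Sum>X = 0 \<Longrightarrow> X = {}"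
proof -
  assume a: "f2.independent S" "finite X" "X \<subseteq> S" "\<Sum>X = 0"
  have "(\<Sum>v\<in>X. sc ((\<lambda>_. 1::bit) v) v) = 0" using a(4) by (simp add: sc_def)
  from f2.independentD[OF a(1,2,3) this] show "X = {}" by auto
qed

lemma sum_symdiff: "finite X \<Longrightarrow> finite Y \<Longrightarrow> \<Sum>X + \<Sum>Y = (\<Sum>((X - Y) \<union> (Y - X)) :: 'v::f2)"
proof -
  assume f: "finite X" "finite Y"
  have 1: "\<Sum>X = \<Sum>(X - Y) + \<Sum>(X \<inter> Y)"
    using f by (metis Int_Diff_Un Int_Diff_disjoint finite_Diff finite_Int sum.union_disjoint add.commute Int_commute inf_commute Un_commute)
  have 2: "\<Sum>Y = \<Sum>(Y - X) + \<Sum>(X \<inter> Y)"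
    using f by (metis Int_Diff_Un Int_Diff_disjoint Int_commute add.commute finite_Diff finite_Int sum.union_disjoint)
  have 3: "\<Sum>((X - Y) \<union> (Y - X)) = \<Sum>(X - Y) + (\<Sum>(Y - X) :: 'v)"
    using f by (intro sum.union_disjoint) auto
  show ?thesis unfolding 1 2 3 by (metis add.assoc add.commute f2_add_self_left)
qed

lemma indep_sum_inj: "f2.independent (S::'v::f2 set) \<Longrightarrow> inj_on Sum (Fpow S)"
proof (rule inj_onI)
  fix X Y assume a: "f2.independent S" "X \<in> Fpow S" "Y \<in> Fpow S" "\<Sum>X = \<Sum>Y"
  then have f: "finite X" "finite Y" "X \<subseteq> S" "Y \<subseteq> S" by (auto simp: Fpow_def)
  have "\<Sum>X + \<Sum>Y = (0::'v)" using a(4) by (simp add: add_self)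
  then have "\<Sum>((X - Y) \<union> (Y - X)) = (0::'v)" using sum_symdiff[OF f(1,2)] by simp
  from indep_sum0[OF a(1) _ _ this] f have "(X - Y) \<union> (Y - X) = {}" by auto
  then show "X = Y" by auto
qed

lemma span_bij: "f2.independent (S::'v::f2 set) \<Longrightarrow> bij_betw Sum (Fpow S) (f2.span S)"
  unfolding bij_betw_def using indep_sum_inj by (auto simp: span_f2 Fpow_def)

lemma span_eqpoll: "f2.independent (S::'v::f2 set) \<Longrightarrow> f2.span S \<approx> Fpow S"
  using span_bij eqpoll_def eqpoll_sym by blast

lemma finite_Fpow_iff: "finite (Fpow A) \<longleftrightarrow> finite A"
proof
  assume "finite (Fpow A)"
  moreover have "(\<lambda>x. {x}) ` A \<subseteq> Fpow A" by (auto simp: Fpow_def)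
  ultimately have "finite ((\<lambda>x. {x}) ` A)" by (rule finite_subset[rotated])
  then show "finite A" using finite_imageD[of "\<lambda>x. {x}" A] by (auto simp: inj_on_def)
next
  assume "finite A"
  then have "Fpow A \<subseteq> Pow A" by (auto simp: Fpow_def)
  then show "finite (Fpow A)" using \<open>finite A\<close> finite_subset by blast
qed

lemma Fpow_finite_eq: "finite A \<Longrightarrow> Fpow A = Pow A"
  by (auto simp: Fpow_def intro: finite_subset)

lemma Fpow_eqpoll_imp: assumes "Fpow A \<approx> Fpow B" shows "A \<approx> B"
proof (cases "finite A")
  case True
  then have "finite (Fpow B)" using assms eqpoll_finite_iff finite_Fpow_iff by blast
  then have fB: "finite B" using finite_Fpow_iff by blast
  have "Pow A \<approx> Pow B" using assms Fpow_finite_eq[OF True] Fpow_finite_eq[OF fB] by simp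
  then have "card (Pow A) = card (Pow B)" using eqpoll_iff_card True fB by (simp add: eqpoll_iff_card)
  then have "card A = card B" using True fB by (simp add: card_Pow)
  then show ?thesis using True fB eqpoll_iff_card by blast
next
  case False
  then have "infinite (Fpow B)" using assms eqpoll_finite_iff finite_Fpow_iff by blast
  then have "infinite B" using finite_Fpow_iff by blast
  then show ?thesis using False assms eqpoll_Fpow eqpoll_sym eqpoll_trans by metis
qed

lemma span_eqpoll_imp: "f2.independent (A::'v::f2 set) \<Longrightarrow> f2.independent (B::'w::f2 set) \<Longrightarrow>
   f2.span A \<approx> f2.span B \<Longrightarrow> A \<approx> B"
  by (meson Fpow_eqpoll_imp eqpoll_sym eqpoll_trans span_eqpoll)

lemma basis_unique: "f2.independent (A::'v::f2 set) \<Longrightarrow> f2.independent B \<Longrightarrow> f2.span A = f2.span B \<Longrightarrow> A \<approx> B"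
  by (simp add: span_eqpoll_imp)

lemma span_disj: assumes "f2.independent (A \<union> C)" "A \<inter> C = {}"
  shows "f2.span A \<inter> f2.span C = {0::'v::f2}"
proof -
  have "x = 0" if xx: "x \<in> f2.span A" "x \<in> f2.span C" for x
  proof -
    obtain X Y where XY: "x = \<Sum>X" "finite X" "X \<subseteq> A" "x = \<Sum>Y" "finite Y" "Y \<subseteq> C"
      using xx unfolding span_f2 by blast
    have "X = Y" using indep_sum_inj[OF assms(1)] XY unfolding inj_on_def Fpow_def by blast
    then have "X = {}" using XY assms(2) by blast
    then show ?thesis using XY by simp
  qed
  then show ?thesis using f2.span_zero by blast
qed

definition cosets :: "'v::f2 set \<Rightarrow> 'v \<Rightarrow> 'v set" where
  "cosets S x = (\<lambda>a. x + a) ` S"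

lemma cosets_eq: assumes "f2.subspace S" "a \<in> S" shows "cosets S (x + a) = cosets S x"
proof -
  have "(\<lambda>b. x + a + b) ` S = (\<lambda>b. x + b) ` S"
  proof (intro Set.set_eqI iffI)
    fix y assume "y \<in> (\<lambda>b. x + a + b) ` S"
    then obtain b where "b \<in> S" "y = x + (a + b)" by (auto simp: add.assoc)
    then show "y \<in> (\<lambda>b. x + b) ` S" using assms f2.subspace_add by blast
  next
    fix y assume "y \<in> (\<lambda>b. x + b) ` S"
    then obtain b where "b \<in> S" "y = x + a + (a + b)" by (auto simp: add.assoc)
    then show "y \<in> (\<lambda>b. x + a + b) ` S" using assms f2.subspace_add by blast
  qed
  then show ?thesis by (simp add: cosets_def)
qed

lemma cosets_inj: assumes "f2.independent (A \<union> C)" "A \<inter> C = {}"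
  shows "inj_on (cosets (f2.span A)) (f2.span (C::'v::f2 set))"
proof (rule inj_onI)
  fix x y assume a: "x \<in> f2.span C" "y \<in> f2.span C" "cosets (f2.span A) x = cosets (f2.span A) y"
  have "x \<in> cosets (f2.span A) x" unfolding cosets_def using f2.span_zero by force
  then obtain b where b: "b \<in> f2.span A" "x = y + b" using a(3) by (auto simp: cosets_def)
  then have "b = x + y" by (metis add.commute f2_add_self_left)
  then have "b \<in> f2.span C" using a f2.span_add by simp
  then have "b = 0" using span_disj[OF assms] b by blast
  then show "x = y" using b by simp
qed

lemma cosets_image: "cosets (f2.span A) ` f2.span C = cosets (f2.span A) ` f2.span ((A::'v::f2 set) \<union> C)"
proof
  show "cosets (f2.span A) ` f2.span C \<subseteq> cosets (f2.span A) ` f2.span (A \<union> C)"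
    using f2.span_mono by blast
next
  show "cosets (f2.span A) ` f2.span (A \<union> C) \<subseteq> cosets (f2.span A) ` f2.span C"
  proof
    fix z assume "z \<in> cosets (f2.span A) ` f2.span (A \<union> C)"
    then obtain a c where ac: "a \<in> f2.span A" "c \<in> f2.span C" "z = cosets (f2.span A) (a + c)"
      unfolding f2.span_Un by blast
    then have "z = cosets (f2.span A) c" using cosets_eq[of "f2.span A" a c] by (simp add: add.commute)
    then show "z \<in> cosets (f2.span A) ` f2.span C" using ac by blast
  qed
qed

lemma compl_unique:
  assumes "f2.independent (A \<union> C)" "A \<inter> C = {}" "f2.independent (A' \<union> C')" "A' \<inter> C' = {}"
    "f2.span A = f2.span A'" "f2.span (A \<union> C) = f2.span ((A'::'v::f2 set) \<union> C')"
  shows "C \<approx> C'"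
proof -
  have "f2.span C \<approx> cosets (f2.span A) ` f2.span C"
    using cosets_inj[OF assms(1,2)] eqpoll_sym inj_on_image_eqpoll_self by blast
  also have "\<dots> = cosets (f2.span A') ` f2.span C'"
    using cosets_image[of A C] cosets_image[of A' C'] assms(5,6) by simp
  also have "\<dots> \<approx> f2.span C'"
    using cosets_inj[OF assms(3,4)] inj_on_image_eqpoll_self by blast
  finally show ?thesis
    using span_eqpoll_imp f2.independent_mono assms(1,3) by blast
qed

lemma lin_mh: "Vector_Spaces.linear sc sc (f::'v::f2 \<Rightarrow> 'w::f2) \<Longrightarrow> module_hom sc sc f"
  by (simp add: module_hom_iff_linear)

lemma lin_add: "Vector_Spaces.linear sc sc (f::'v::f2 \<Rightarrow> 'w::f2) \<Longrightarrow> f (x + y) = f x + f y"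
  by (simp add: lin_iff)

lemma lin_zero: "Vector_Spaces.linear sc sc (f::'v::f2 \<Rightarrow> 'w::f2) \<Longrightarrow> f 0 = 0"
  by (metis add_0 add_self lin_add)

lemma lin_sum: "Vector_Spaces.linear sc sc (f::'v::f2 \<Rightarrow> 'w::f2) \<Longrightarrow> f (\<Sum>x\<in>X. g x) = (\<Sum>x\<in>X. f (g x))"
  by (induction X rule: infinite_finite_induct) (auto simp: lin_zero lin_add)

lemma lin_span_image: "Vector_Spaces.linear sc sc (f::'v::f2 \<Rightarrow> 'w::f2) \<Longrightarrow> f2.span (f ` S) = f ` f2.span S"
  using module_hom.span_image[OF lin_mh] by blast

lemma lin_indep_image: "Vector_Spaces.linear sc sc (f::'v::f2 \<Rightarrow> 'w::f2) \<Longrightarrow> f2.independent S \<Longrightarrow>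
   inj_on f (f2.span S) \<Longrightarrow> f2.independent (f ` S)"
  using module_hom.independent_injective_image[OF lin_mh] by blast

lemma lin_comp: "Vector_Spaces.linear sc sc (f::'v::f2 \<Rightarrow> 'w::f2) \<Longrightarrow> Vector_Spaces.linear sc sc (g::'w \<Rightarrow> 'u::f2)
  \<Longrightarrow> Vector_Spaces.linear sc sc (\<lambda>x. g (f x))"
  by (simp add: lin_iff)

lemma subspace_range: "Vector_Spaces.linear sc sc (f::'v::f2 \<Rightarrow> 'w::f2) \<Longrightarrow> f2.subspace (range f)"
  using module_hom.subspace_image[OF lin_mh, of f UNIV] by simp

lemma subspace_ker: "Vector_Spaces.linear sc sc (f::'v::f2 \<Rightarrow> 'w::f2) \<Longrightarrow> f2.subspace {x. f x = 0}"
  using module_hom.subspace_kernel[OF lin_mh] by blast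

lemma indep_via_sums:
  assumes "\<And>X. finite X \<Longrightarrow> X \<subseteq> S \<Longrightarrow> \<Sum>X = 0 \<Longrightarrow> X = {}"
  shows "f2.independent (S::'v::f2 set)"
  unfolding f2.independent_explicit_module
proof (intro allI impI)
  fix t u v assume a: "finite t" "t \<subseteq> S" "(\<Sum>v\<in>t. sc (u v) v) = 0" "v \<in> t"
  have "(\<Sum>a\<in>{a\<in>t. u a \<noteq> 0}. a) = (\<Sum>a\<in>t. if u a \<noteq> 0 then a else 0)"
    using a(1) by (rule sum.inter_filter)
  also have "\<dots> = (\<Sum>a\<in>t. sc (u a) a)" by (auto simp: sc_def intro!: sum.cong)
  finally have "{a\<in>t. u a \<noteq> 0} = {}" using assms[of "{a\<in>t. u a \<noteq> 0}"] a by auto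
  then show "u v = 0" using a(4) by auto
qed

lemma span_of_subspace: "B \<subseteq> V \<Longrightarrow> V \<subseteq> f2.span B \<Longrightarrow> f2.subspace V \<Longrightarrow> f2.span B = (V::'v::f2 set)"
  using f2.span_subspace by blast

definition is_inv :: "('v::f2 \<Rightarrow> 'v) \<Rightarrow> 'v set \<Rightarrow> 'v set \<Rightarrow> bool" where
  "is_inv s Bf C \<longleftrightarrow> f2.independent Bf \<and> f2.span Bf = range s \<and> f2.independent (Bf \<union> C) \<and>
     Bf \<inter> C = {} \<and> f2.span (Bf \<union> C) = {x. s x = 0}"

lemma inv_exists:
  assumes lin: "Vector_Spaces.linear sc sc (s::'v::f2 \<Rightarrow> 'v)" and ss: "\<And>x. s (s x) = 0"
  shows "\<exists>Bf C. is_inv s Bf C"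
proof -
  obtain B where B: "B \<subseteq> range s" "f2.independent B" "range s \<subseteq> f2.span B"
    using f2.maximal_independent_subset by blast
  have spB: "f2.span B = range s" using span_of_subspace[OF B(1,3) subspace_range[OF lin]] .
  have "B \<subseteq> {x. s x = 0}" using B(1) ss by auto
  then obtain B' where B': "B \<subseteq> B'" "B' \<subseteq> {x. s x = 0}" "f2.independent B'" "{x. s x = 0} \<subseteq> f2.span B'"
    using f2.maximal_independent_subset_extend[OF _ B(2)] by blast
  have spB': "f2.span B' = {x. s x = 0}" using span_of_subspace[OF B'(2,4) subspace_ker[OF lin]] .
  have "is_inv s B (B' - B)" unfolding is_inv_def using B B' spB spB'
    by (simp add: Un_absorb1 Un_Diff_cancel)
  then show ?thesis by blast
qed

lemma basis_iso:
  assumes B1: "f2.independent (B1::'v::f2 set)" "f2.span B1 = UNIV"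
    and B2: "f2.independent (B2::'w::f2 set)" "f2.span B2 = UNIV"
    and g: "bij_betw g B1 B2"
  shows "Vector_Spaces.linear sc sc (f2p.construct B1 g) \<and> bij (f2p.construct B1 g) \<and>
         (\<forall>x\<in>B1. f2p.construct B1 g x = g x)"
proof -
  let ?f = "f2p.construct B1 g"
  let ?h = "f2p.construct B2 (inv_into B1 g)"
  have lf: "Vector_Spaces.linear sc sc ?f" using f2p.linear_construct[OF B1(1)] .
  have lh: "Vector_Spaces.linear sc sc ?h" using f2p.linear_construct[OF B2(1)] .
  have fb: "\<forall>x\<in>B1. ?f x = g x" using f2p.construct_basis[OF B1(1)] by blast
  have "range ?f = f2.span (g ` B1)" using f2p.range_construct_eq_span[OF B1(1)] .
  also have "\<dots> = UNIV" using g B2(2) by (simp add: bij_betw_def)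
  finally have surj: "surj ?f" .
  have "?h (?f x) = x" for x
  proof -
    have "Vector_Spaces.linear sc sc (\<lambda>x. ?h (?f x))" using lin_comp[OF lf lh] .
    moreover have "Vector_Spaces.linear sc sc (\<lambda>x::'v. x)" by (simp add: lin_iff)
    moreover have "x \<in> f2.span B1" using B1 by simp
    moreover have "?h (?f b) = b" if "b \<in> B1" for b
    proof -
      have "?f b = g b" using fb that by blast
      moreover have "g b \<in> B2" using g that bij_betwE by blast
      ultimately have "?h (?f b) = inv_into B1 g (g b)" using f2p.construct_basis[OF B2(1)] by simp
      then show ?thesis using g that bij_betw_inv_into_left by fastforce
    qed
    ultimately show ?thesis using f2p.linear_eq_on[of "\<lambda>x. ?h (?f x)" "\<lambda>x. x" x B1] by blast
  qed
  then have "inj ?f" by (metis injI)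
  then show ?thesis using lf surj fb by (simp add: bij_def)
qed


lemma basis_from_inv:
  assumes lin: "Vector_Spaces.linear sc sc (s::'v::f2 \<Rightarrow> 'v)"
    and Bf: "f2.independent Bf" "f2.span Bf = range s"
    and Bk: "f2.independent Bk" "f2.span Bk = {x. s x = 0}"
    and m: "\<And>b. b \<in> Bf \<Longrightarrow> s (m b) = b"
  shows "f2.independent (m ` Bf \<union> Bk) \<and> f2.span (m ` Bf \<union> Bk) = UNIV \<and> m ` Bf \<inter> Bk = {} \<and> inj_on m Bf"
proof (intro conjI)
  show injm: "inj_on m Bf" using m by (metis inj_onI)
  have kerBk: "x \<in> Bk \<Longrightarrow> s x = 0" for x using Bk(2) f2.span_base by blast
  show disj: "m ` Bf \<inter> Bk = {}"
  proof (rule ccontr)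
    assume "m ` Bf \<inter> Bk \<noteq> {}"
    then obtain b where b: "b \<in> Bf" "m b \<in> Bk" by blast
    then have "b = 0" using m kerBk by metis
    then show False using b Bf(1) f2.dependent_zero by blast
  qed
  show "f2.independent (m ` Bf \<union> Bk)"
  proof (rule indep_via_sums)
    fix X assume X: "finite X" "X \<subseteq> m ` Bf \<union> Bk" "\<Sum>X = 0"
    let ?X1 = "X \<inter> m ` Bf" and ?X2 = "X - m ` Bf"
    have fX: "finite ?X1" "finite ?X2" using X(1) by auto
    have sumX: "\<Sum>X = \<Sum>?X1 + \<Sum>?X2"
      using X(1) by (metis Int_Diff_Un Int_Diff_disjoint fX sum.union_disjoint)
    have "s (\<Sum>?X2) = 0"
      using lin_sum[OF lin, where g="\<lambda>x. x" and X="?X2"] X(2) kerBk by (auto intro!: sum.neutral)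
    moreover have "s (\<Sum>X) = 0" using X(3) lin_zero[OF lin] by simp
    ultimately have "s (\<Sum>?X1) = 0" using sumX lin_add[OF lin] by simp
    moreover have "s (\<Sum>?X1) = \<Sum>(s ` ?X1)"
    proof -
      have "inj_on s ?X1" using m by (auto simp: inj_on_def)
      then show ?thesis using lin_sum[OF lin, where g="\<lambda>x. x" and X="?X1"] by (simp add: sum.reindex)
    qed
    moreover have "s ` ?X1 \<subseteq> Bf" using m by auto
    ultimately have "s ` ?X1 = {}" using indep_sum0[OF Bf(1), of "s ` ?X1"] fX by simp
    then have X1: "?X1 = {}" by blast
    then have "\<Sum>?X2 = 0" using sumX X(3) by simp
    moreover have "?X2 \<subseteq> Bk" using X(2) by auto
    ultimately have "?X2 = {}" using indep_sum0[OF Bk(1)] fX by blast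
    then show "X = {}" using X1 by blast
  qed
  show "f2.span (m ` Bf \<union> Bk) = UNIV"
  proof (intro Set.set_eqI iffI)
    fix v :: 'v
    have "s v \<in> f2.span Bf" using Bf(2) by simp
    then obtain Y where Y: "finite Y" "Y \<subseteq> Bf" "s v = \<Sum>Y" unfolding span_f2 by blast
    let ?x = "\<Sum>(m ` Y)"
    have x1: "?x \<in> f2.span (m ` Bf)" using Y by (intro f2.span_sum) (auto intro: f2.span_base)
    have "s ?x = (\<Sum>y\<in>m ` Y. s y)" using lin_sum[OF lin, where g="\<lambda>x. x" and X="m ` Y"] by simp
    also have "\<dots> = (\<Sum>y\<in>Y. s (m y))"
      using Y injm by (subst sum.reindex) (auto intro: inj_on_subset)
    also have "\<dots> = \<Sum>Y" using Y m by (auto intro!: sum.cong)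
    finally have "s (v + ?x) = 0" using Y(3) lin_add[OF lin] by (simp add: add_self)
    then have x2: "v + ?x \<in> f2.span Bk" using Bk(2) by simp
    have "v = ?x + (v + ?x)" by (metis add.commute f2_add_self_left)
    then show "v \<in> f2.span (m ` Bf \<union> Bk)" unfolding f2.span_Un using x1 x2 by blast
  qed simp
qed

lemma lin_image_span_range:
  assumes "Vector_Spaces.linear sc sc (\<phi>::'v::f2 \<Rightarrow> 'w::f2)" "surj \<phi>" "\<And>x. \<phi> (s1 x) = s2 (\<phi> x)"
  shows "\<phi> ` range s1 = range s2"
proof -
  have "\<phi> ` range s1 = range (\<lambda>x. s2 (\<phi> x))" using assms(3) by (auto simp: image_iff)
  also have "\<dots> = s2 ` range \<phi>" by auto
  finally show ?thesis using assms(2) by simp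
qed

lemma lin_image_ker:
  assumes "Vector_Spaces.linear sc sc (\<phi>::'v::f2 \<Rightarrow> 'w::f2)" "bij \<phi>" "\<And>x. \<phi> (s1 x) = s2 (\<phi> x)"
    "Vector_Spaces.linear sc sc s1"
  shows "\<phi> ` {x. s1 x = 0} = {y. s2 y = 0}"
proof (intro Set.set_eqI iffI)
  fix y assume "y \<in> \<phi> ` {x. s1 x = 0}"
  then show "y \<in> {y. s2 y = 0}" using assms lin_zero by (metis (mono_tags, lifting) image_iff mem_Collect_eq)
next
  fix y assume y: "y \<in> {y. s2 y = 0}"
  obtain x where x: "y = \<phi> x" using assms(2) by (metis bij_pointE)
  then have "\<phi> (s1 x) = \<phi> 0" using y assms(3) lin_zero[OF assms(1)] by simp
  then have "s1 x = 0" using assms(2) by (simp add: bij_def inj_eq)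
  then show "y \<in> \<phi> ` {x. s1 x = 0}" using x by blast
qed

lemma struct_iff:
  assumes lin1: "Vector_Spaces.linear sc sc (s1::'v::f2 \<Rightarrow> 'v)"
    and lin2: "Vector_Spaces.linear sc sc (s2::'w::f2 \<Rightarrow> 'w)"
    and inv1: "is_inv s1 Bf1 C1" and inv2: "is_inv s2 Bf2 C2"
  shows "(\<exists>\<phi>. Vector_Spaces.linear sc sc \<phi> \<and> bij \<phi> \<and> (\<forall>x. \<phi> (s1 x) = s2 (\<phi> x))) \<longleftrightarrow>
         Bf1 \<approx> Bf2 \<and> C1 \<approx> C2"
proof
  assume "\<exists>\<phi>. Vector_Spaces.linear sc sc \<phi> \<and> bij \<phi> \<and> (\<forall>x. \<phi> (s1 x) = s2 (\<phi> x))"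
  then obtain \<phi> where \<phi>: "Vector_Spaces.linear sc sc \<phi>" "bij \<phi>" "\<And>x. \<phi> (s1 x) = s2 (\<phi> x)" by blast
  have inj: "inj_on \<phi> A" for A using bij_is_inj[OF \<phi>(2)] inj_on_subset subset_UNIV by blast
  have surj: "surj \<phi>" using bij_is_surj[OF \<phi>(2)] .
  have i1: "f2.independent (\<phi> ` Bf1)" using lin_indep_image[OF \<phi>(1)] inv1 inj unfolding is_inv_def by blast
  have s1: "f2.span (\<phi> ` Bf1) = f2.span Bf2"
    using lin_span_image[OF \<phi>(1)] lin_image_span_range[of \<phi> s1 s2, OF \<phi>(1) surj \<phi>(3)] inv1 inv2
    unfolding is_inv_def by simp
  have "Bf1 \<approx> \<phi> ` Bf1" using inj eqpoll_sym inj_on_image_eqpoll_self by blast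
  also have "\<phi> ` Bf1 \<approx> Bf2" using basis_unique[OF i1 _ s1] inv2 unfolding is_inv_def by blast
  finally have c1: "Bf1 \<approx> Bf2" .
  have i2: "f2.independent (\<phi> ` Bf1 \<union> \<phi> ` C1)"
  proof -
    have "f2.independent (\<phi> ` (Bf1 \<union> C1))"
      using lin_indep_image[OF \<phi>(1), of "Bf1 \<union> C1"] inv1 inj unfolding is_inv_def by blast
    then show ?thesis by (simp add: image_Un)
  qed
  have d2: "\<phi> ` Bf1 \<inter> \<phi> ` C1 = {}" using inv1 image_Int[OF bij_is_inj[OF \<phi>(2)], of Bf1 C1]
    unfolding is_inv_def by simp
  have s2: "f2.span (\<phi> ` Bf1 \<union> \<phi> ` C1) = f2.span (Bf2 \<union> C2)"
    using lin_span_image[OF \<phi>(1), of "Bf1 \<union> C1"] lin_image_ker[of \<phi> s1 s2, OF \<phi> lin1] inv1 inv2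
    unfolding is_inv_def image_Un by simp
  have "C1 \<approx> \<phi> ` C1" using inj eqpoll_sym inj_on_image_eqpoll_self by blast
  also have "\<phi> ` C1 \<approx> C2" using compl_unique[OF i2 d2 _ _ s1 s2] inv2 unfolding is_inv_def by blast
  finally show "Bf1 \<approx> Bf2 \<and> C1 \<approx> C2" using c1 by blast
next
  assume "Bf1 \<approx> Bf2 \<and> C1 \<approx> C2"
  then obtain h k where h: "bij_betw h Bf1 Bf2" and k: "bij_betw k C1 C2" unfolding eqpoll_def by blast
  define m1 where "m1 b = (SOME x. s1 x = b)" for b
  define m2 where "m2 b = (SOME x. s2 x = b)" for b
  have m1: "s1 (m1 b) = b" if "b \<in> Bf1" for b
  proof -
    have "b \<in> range s1" using inv1 that f2.span_base unfolding is_inv_def by blast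
    then show ?thesis unfolding m1_def by (metis (mono_tags, lifting) imageE someI)
  qed
  have m2: "s2 (m2 b) = b" if "b \<in> Bf2" for b
  proof -
    have "b \<in> range s2" using inv2 that f2.span_base unfolding is_inv_def by blast
    then show ?thesis unfolding m2_def by (metis (mono_tags, lifting) imageE someI)
  qed
  have B1: "f2.independent (m1 ` Bf1 \<union> (Bf1 \<union> C1)) \<and> f2.span (m1 ` Bf1 \<union> (Bf1 \<union> C1)) = UNIV \<and>
      m1 ` Bf1 \<inter> (Bf1 \<union> C1) = {} \<and> inj_on m1 Bf1"
  proof -
    have "f2.independent Bf1" "f2.span Bf1 = range s1" "f2.independent (Bf1 \<union> C1)"
      "f2.span (Bf1 \<union> C1) = {x. s1 x = 0}" using inv1 unfolding is_inv_def by auto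
    from basis_from_inv[OF lin1 this m1] show ?thesis .
  qed
  have B2: "f2.independent (m2 ` Bf2 \<union> (Bf2 \<union> C2)) \<and> f2.span (m2 ` Bf2 \<union> (Bf2 \<union> C2)) = UNIV \<and>
      m2 ` Bf2 \<inter> (Bf2 \<union> C2) = {} \<and> inj_on m2 Bf2"
  proof -
    have "f2.independent Bf2" "f2.span Bf2 = range s2" "f2.independent (Bf2 \<union> C2)"
      "f2.span (Bf2 \<union> C2) = {x. s2 x = 0}" using inv2 unfolding is_inv_def by auto
    from basis_from_inv[OF lin2 this m2] show ?thesis .
  qed
  define g where "g x = (if x \<in> Bf1 then h x else if x \<in> C1 then k x else m2 (h (inv_into Bf1 m1 x)))" for x
  have d1: "Bf1 \<inter> C1 = {}" and d2: "Bf2 \<inter> C2 = {}" using inv1 inv2 unfolding is_inv_def by auto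
  have gb1: "bij_betw g Bf1 Bf2" using h by (rule bij_betw_cong[THEN iffD1, rotated]) (simp add: g_def)
  have gb2: "bij_betw g C1 C2" using k by (rule bij_betw_cong[THEN iffD1, rotated]) (use d1 in \<open>auto simp: g_def\<close>)
  have "bij_betw (m2 \<circ> h \<circ> inv_into Bf1 m1) (m1 ` Bf1) (m2 ` Bf2)"
  proof (intro bij_betw_trans)
    show "bij_betw (inv_into Bf1 m1) (m1 ` Bf1) Bf1" using B1 by (simp add: bij_betw_inv_into inj_on_imp_bij_betw)
    show "bij_betw h Bf1 Bf2" by (rule h)
    show "bij_betw m2 Bf2 (m2 ` Bf2)" using B2 by (simp add: inj_on_imp_bij_betw)
  qed
  then have gb3: "bij_betw g (m1 ` Bf1) (m2 ` Bf2)"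
    by (rule bij_betw_cong[THEN iffD1, rotated]) (use B1 in \<open>auto simp: g_def\<close>)
  have gb: "bij_betw g (m1 ` Bf1 \<union> (Bf1 \<union> C1)) (m2 ` Bf2 \<union> (Bf2 \<union> C2))"
  proof -
    have gb12: "bij_betw g (Bf1 \<union> C1) (Bf2 \<union> C2)" using bij_betw_combine[OF gb1 gb2] d2 by blast
    show ?thesis using bij_betw_combine[OF gb3 gb12] B2 by blast
  qed
  let ?B1 = "m1 ` Bf1 \<union> (Bf1 \<union> C1)"
  define \<phi> where "\<phi> = f2p.construct ?B1 g"
  have \<phi>: "Vector_Spaces.linear sc sc \<phi> \<and> bij \<phi> \<and> (\<forall>x\<in>?B1. \<phi> x = g x)"
    unfolding \<phi>_def using basis_iso[OF _ _ _ _ gb] B1 B2 by blast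
  have "\<phi> (s1 x) = s2 (\<phi> x)" for x
  proof (rule f2p.linear_eq_on[of "\<lambda>x. \<phi> (s1 x)" "\<lambda>x. s2 (\<phi> x)" x ?B1])
    show "Vector_Spaces.linear sc sc (\<lambda>x. \<phi> (s1 x))" using lin_comp lin1 \<phi> by blast
    show "Vector_Spaces.linear sc sc (\<lambda>x. s2 (\<phi> x))" using lin_comp lin2 \<phi> by blast
    show "x \<in> f2.span ?B1" using B1 by simp
  next
    fix b assume b: "b \<in> ?B1"
    have ker1: "s1 y = 0" if "y \<in> Bf1 \<union> C1" for y using inv1 that f2.span_base unfolding is_inv_def
      by (metis (mono_tags, lifting) mem_Collect_eq)
    have ker2: "s2 y = 0" if "y \<in> Bf2 \<union> C2" for y using inv2 that f2.span_base unfolding is_inv_def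
      by (metis (mono_tags, lifting) mem_Collect_eq)
    show "\<phi> (s1 b) = s2 (\<phi> b)"
    proof (cases "b \<in> Bf1 \<union> C1")
      case True
      then have "g b \<in> Bf2 \<union> C2" using gb1 gb2 bij_betwE by blast
      then show ?thesis using True ker1 ker2 \<phi> lin_zero b by metis
    next
      case False
      then obtain c where c: "c \<in> Bf1" "b = m1 c" using b by blast
      then have "b \<notin> Bf1" "b \<notin> C1" using False by auto
      then have "g b = m2 (h c)" unfolding g_def using c B1 by (simp add: inv_into_f_f)
      then have "s2 (\<phi> b) = h c" using \<phi> b m2 h c(1) bij_betwE by metis
      moreover have "\<phi> (s1 b) = h c" using c m1 \<phi> g_def by simp
      ultimately show ?thesis by simp
    qed
  qed
  then show "\<exists>\<phi>. Vector_Spaces.linear sc sc \<phi> \<and> bij \<phi> \<and> (\<forall>x. \<phi> (s1 x) = s2 (\<phi> x))" using \<phi> by blast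
qed

definition sqrel :: "'a::field \<Rightarrow> 'a \<Rightarrow> bool" where
  "sqrel x y \<longleftrightarrow> x \<noteq> 0 \<and> y \<noteq> 0 \<and> (\<exists>w. x = y * w * w)"

lemma part_equivp_sqrel: "part_equivp (sqrel :: 'a::field \<Rightarrow> 'a \<Rightarrow> bool)"
proof (rule part_equivpI)
  show "\<exists>x::'a. sqrel x x" by (rule exI[of _ 1]) (auto simp: sqrel_def intro: exI[of _ 1])
  show "symp (sqrel :: 'a \<Rightarrow> 'a \<Rightarrow> bool)"
  proof (rule sympI)
    fix x y :: 'a assume "sqrel x y"
    then obtain w where w: "x \<noteq> 0" "y \<noteq> 0" "x = y * w * w" by (auto simp: sqrel_def)
    then have "w \<noteq> 0" by auto
    then have eq: "y = x * (1/w) * (1/w)" using w by (simp add: field_simps)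
    show "sqrel y x" unfolding sqrel_def using w(1,2) eq by blast
  qed
  show "transp (sqrel :: 'a \<Rightarrow> 'a \<Rightarrow> bool)"
  proof (rule transpI)
    fix x y z :: 'a assume "sqrel x y" "sqrel y z"
    then obtain w v where "x \<noteq> 0" "z \<noteq> 0" "x = y * w * w" "y = z * v * v" by (auto simp: sqrel_def)
    then have "x = z * (v * w) * (v * w)" by (simp add: algebra_simps)
    then show "sqrel x z" unfolding sqrel_def using \<open>x \<noteq> 0\<close> \<open>z \<noteq> 0\<close> by blast
  qed
qed

quotient_type (overloaded) 'a sq = "'a::field" / partial: "sqrel"
  by (rule part_equivp_sqrel)

lemma sqrel_mult: "sqrel x x' \<Longrightarrow> sqrel y y' \<Longrightarrow> sqrel (x * y) (x' * y')"
proof -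
  assume "sqrel x x'" "sqrel y y'"
  then obtain w v where "x \<noteq> 0" "x' \<noteq> 0" "y \<noteq> 0" "y' \<noteq> 0" "x = x' * w * w" "y = y' * v * v"
    by (auto simp: sqrel_def)
  then show ?thesis unfolding sqrel_def by (auto intro!: exI[of _ "w * v"] simp: algebra_simps)
qed

lemma sqrel_sq: "x \<noteq> 0 \<Longrightarrow> sqrel (x*x) (1::'a::field)"
  unfolding sqrel_def by (auto intro!: exI[of _ x])

instantiation sq :: (field) f2
begin
lift_definition zero_sq :: "'a sq" is "1" by (auto simp: sqrel_def intro: exI[of _ 1])
lift_definition plus_sq :: "'a sq \<Rightarrow> 'a sq \<Rightarrow> 'a sq" is "\<lambda>x y. x * y" by (rule sqrel_mult)
lift_definition minus_sq :: "'a sq \<Rightarrow> 'a sq \<Rightarrow> 'a sq" is "\<lambda>x y. x * y" by (rule sqrel_mult)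
lift_definition uminus_sq :: "'a sq \<Rightarrow> 'a sq" is "\<lambda>x. x" by simp
instance
proof
  fix a b c :: "'a sq"
  show "a + b + c = a + (b + c)" by transfer (auto simp: sqrel_def intro: exI[of _ 1])
  show "a + b = b + a" by transfer (auto simp: sqrel_def intro: exI[of _ 1])
  show "0 + a = a" by transfer (auto simp: sqrel_def intro: exI[of _ 1])
  show "- a + a = 0" by transfer (metis sqrel_def sqrel_sq)
  show "a - b = a + - b" by transfer (auto simp: sqrel_def intro: exI[of _ 1])
  show "a + a = 0" by transfer (metis sqrel_def sqrel_sq)
qed
end

lift_definition cls :: "'a::field \<Rightarrow> 'a sq" is "\<lambda>x. if x = 0 then 1 else x"
  by (auto simp: sqrel_def intro: exI[of _ 1])

lemma cls_eq: "x \<noteq> 0 \<Longrightarrow> y \<noteq> 0 \<Longrightarrow> cls x = cls y \<longleftrightarrow> (\<exists>w. x = y * w * w)"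
  by transfer (auto simp: sqrel_def)

lemma cls_add: "x \<noteq> 0 \<Longrightarrow> y \<noteq> 0 \<Longrightarrow> cls x + cls y = cls (x * y)"
  by transfer (auto simp: sqrel_def intro: exI[of _ 1])

lemma cls_1: "cls 1 = 0"
  by transfer (auto simp: sqrel_def intro: exI[of _ 1])

lemma cls_surj: "\<exists>x. x \<noteq> 0 \<and> q = cls x"
proof transfer
  fix q :: 'a assume "sqrel q q"
  then show "\<exists>x. x \<noteq> 0 \<and> sqrel q (if x = 0 then 1 else x)"
    by (intro exI[of _ q]) (auto simp: sqrel_def intro: exI[of _ 1])
qed

lemma cls_eq0: "x \<noteq> 0 \<Longrightarrow> cls x = 0 \<longleftrightarrow> (\<exists>w. x = w * w)"
  using cls_eq[of x 1] by (simp add: cls_1)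


definition mhom :: "('a::field \<Rightarrow> 'b::field) \<Rightarrow> bool" where
  "mhom f \<longleftrightarrow> (\<forall>x y. f (x * y) = f x * f y) \<and> (\<forall>x. x \<noteq> 0 \<longrightarrow> f x \<noteq> 0)"

definition sqmap :: "('a::field \<Rightarrow> 'b::field) \<Rightarrow> 'a sq \<Rightarrow> 'b sq" where
  "sqmap f q = cls (f (SOME x. x \<noteq> 0 \<and> q = cls x))"

lemma sqmap_cls: assumes "mhom f" "x \<noteq> 0" shows "sqmap f (cls x) = cls (f x)"
proof -
  define x' where "x' = (SOME x'. x' \<noteq> 0 \<and> cls x = cls x')"
  have x': "x' \<noteq> 0" "cls x = cls x'" unfolding x'_def using someI_ex[OF cls_surj[of "cls x"]] by auto
  then obtain w where w: "x' = x * w * w" using cls_eq assms(2) by metis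
  then have "f x' = f x * f w * f w" using assms(1) by (simp add: mhom_def)
  moreover have "f x \<noteq> 0" "f x' \<noteq> 0" using assms x' by (auto simp: mhom_def)
  ultimately have "cls (f x') = cls (f x)" using cls_eq by metis
  then show ?thesis unfolding sqmap_def x'_def[symmetric] by simp
qed

lemma sq_cases: obtains x where "x \<noteq> 0" "q = cls x"
  using cls_surj by blast

lemma sqmap_lin: assumes "mhom f" shows "Vector_Spaces.linear sc sc (sqmap f)"
  unfolding lin_iff
proof (intro allI)
  fix p q :: "'a sq"
  obtain x y where xy: "x \<noteq> 0" "y \<noteq> 0" "p = cls x" "q = cls y" by (metis sq_cases)
  have "f x \<noteq> 0" "f y \<noteq> 0" using assms xy by (auto simp: mhom_def)
  then show "sqmap f (p + q) = sqmap f p + sqmap f q"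
    using xy assms by (simp add: cls_add sqmap_cls mhom_def)
qed

locale qe =
  fixes \<iota> :: "'a::field \<Rightarrow> 'k::field" and a :: 'a and r :: 'k and \<sigma> :: "'k \<Rightarrow> 'k"
  assumes char: "(2::'a) \<noteq> 0" and a0: "a \<noteq> 0" and ansq: "a \<notin> squares_of_field"
    and K: "quad_ext \<iota> a r" and G: "gal_generator \<iota> \<sigma>"
begin

lemma i_add: "\<iota> (x + y) = \<iota> x + \<iota> y" using K by (simp add: quad_ext_def)
lemma i_mult: "\<iota> (x * y) = \<iota> x * \<iota> y" using K by (simp add: quad_ext_def)
lemma i_1: "\<iota> 1 = 1" using K by (simp add: quad_ext_def)
lemma r_sq: "r * r = \<iota> a" using K by (simp add: quad_ext_def)
lemma repr: "\<exists>x y. z = \<iota> x + \<iota> y * r" using K by (simp add: quad_ext_def)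
lemma s_add: "\<sigma> (x + y) = \<sigma> x + \<sigma> y" using G by (simp add: gal_generator_def)
lemma s_mult: "\<sigma> (x * y) = \<sigma> x * \<sigma> y" using G by (simp add: gal_generator_def)
lemma s_fix: "\<sigma> (\<iota> x) = \<iota> x" using G by (simp add: gal_generator_def)
lemma s_bij: "bij \<sigma>" using G by (simp add: gal_generator_def)
lemma s_nid: "\<sigma> \<noteq> id" using G by (simp add: gal_generator_def)

lemma i_0: "\<iota> 0 = 0"
proof -
  have "\<iota> 0 + \<iota> 0 = \<iota> 0 + 0" using i_add[of 0 0] by simp
  then show ?thesis by (rule add_left_imp_eq)
qed
lemma i_neg: "\<iota> (- x) = - \<iota> x" using i_add[of x "-x"] i_0 by (simp add: eq_neg_iff_add_eq_0 add.commute)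
lemma i_diff: "\<iota> (x - y) = \<iota> x - \<iota> y" using i_add[of x "-y"] i_neg by simp
lemma i_nz: "x \<noteq> 0 \<Longrightarrow> \<iota> x \<noteq> 0" using i_mult[of x "1/x"] i_1 by auto
lemma i_inj: "\<iota> x = \<iota> y \<longleftrightarrow> x = y" using i_diff[of x y] i_nz[of "x - y"] by auto
lemma i_inv: "x \<noteq> 0 \<Longrightarrow> \<iota> (1/x) = 1 / \<iota> x"
  using i_mult[of x "1/x"] i_1 i_nz by (simp add: field_simps)
lemma i_div: "y \<noteq> 0 \<Longrightarrow> \<iota> (x/y) = \<iota> x / \<iota> y"
  using i_mult[of x "1/y"] i_inv by (simp add: field_simps)
lemma i_2: "\<iota> 2 = 2"
proof -
  have "\<iota> 2 = \<iota> (1 + 1)" by simp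
  also have "\<dots> = 1 + 1" by (simp only: i_add i_1)
  finally show ?thesis by simp
qed
lemma char_k: "(2::'k) \<noteq> 0" using i_2 i_nz char by metis

lemma a_nsq: "a \<noteq> c * c" using ansq a0 by (auto simp: squares_of_field_def)

lemma s_0: "\<sigma> 0 = 0"
proof -
  have "\<sigma> 0 + \<sigma> 0 = \<sigma> 0 + 0" using s_add[of 0 0] by simp
  then show ?thesis by (rule add_left_imp_eq)
qed
lemma s_1: "\<sigma> 1 = 1" using s_fix[of 1] i_1 by simp
lemma s_neg: "\<sigma> (- x) = - \<sigma> x" using s_add[of x "-x"] s_0 by (simp add: eq_neg_iff_add_eq_0 add.commute)
lemma s_diff: "\<sigma> (x - y) = \<sigma> x - \<sigma> y" using s_add[of x "-y"] s_neg by simp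
lemma s_nz: "z \<noteq> 0 \<Longrightarrow> \<sigma> z \<noteq> 0" using s_bij s_0 by (metis bij_def inj_eq)
lemma s_inv: "z \<noteq> 0 \<Longrightarrow> \<sigma> (1/z) = 1 / \<sigma> z"
  using s_mult[of z "1/z"] s_1 s_nz by (simp add: field_simps)
lemma s_div: "w \<noteq> 0 \<Longrightarrow> \<sigma> (z/w) = \<sigma> z / \<sigma> w"
  using s_mult[of z "1/w"] s_inv by (simp add: field_simps)

lemma r0: "r \<noteq> 0" using r_sq i_nz a0 by force

lemma indep2: assumes "\<iota> p + \<iota> q * r = 0" shows "p = 0 \<and> q = 0"
proof (cases "q = 0")
  case True
  then show ?thesis using assms i_0 i_nz by force
next
  case False
  have "- \<iota> p = \<iota> q * r" using assms neg_eq_iff_add_eq_0 by blast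
  then have "r = \<iota> (- p / q)" using i_nz[OF False] False by (simp add: i_div i_neg field_simps)
  then have "\<iota> a = \<iota> ((- p / q) * (- p / q))" using r_sq by (simp only: i_mult)
  then show ?thesis using a_nsq i_inj by blast
qed

lemma s_r: "\<sigma> r = - r"
proof -
  have "\<sigma> r * \<sigma> r = r * r" using s_mult[of r r] r_sq s_fix by simp
  then have "(\<sigma> r - r) * (\<sigma> r + r) = 0" by (simp add: algebra_simps)
  moreover have "\<sigma> r \<noteq> r"
  proof
    assume sr: "\<sigma> r = r"
    have "\<sigma> z = z" for z
    proof -
      obtain x y where "z = \<iota> x + \<iota> y * r" using repr by blast
      then show ?thesis using sr by (simp add: s_add s_mult s_fix)
    qed
    then show False using s_nid by auto
  qed
  ultimately show ?thesis by (simp add: eq_neg_iff_add_eq_0)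
qed

lemma s_form: "\<sigma> (\<iota> x + \<iota> y * r) = \<iota> x - \<iota> y * r"
  by (simp add: s_add s_mult s_fix s_r)

lemma ss: "\<sigma> (\<sigma> z) = z"
proof -
  obtain x y where "z = \<iota> x + \<iota> y * r" using repr by blast
  then show ?thesis by (simp add: s_form s_diff s_mult s_fix s_r)
qed

lemma norm_form: "(\<iota> x + \<iota> y * r) * \<sigma> (\<iota> x + \<iota> y * r) = \<iota> (x * x - a * y * y)"
proof -
  have "(\<iota> x + \<iota> y * r) * (\<iota> x - \<iota> y * r) = \<iota> x * \<iota> x - \<iota> y * \<iota> y * (r * r)"
    by (simp add: algebra_simps)
  also have "\<dots> = \<iota> (x * x - a * y * y)" by (simp add: r_sq i_diff i_mult algebra_simps)
  finally show ?thesis by (simp only: s_form)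
qed

lemma norm_in: "\<exists>x. z * \<sigma> z = \<iota> x"
proof -
  obtain x y where "z = \<iota> x + \<iota> y * r" using repr by blast
  then show ?thesis using norm_form by blast
qed

lemma sq_in_F: assumes "x \<noteq> 0" "\<iota> x = w * w" shows "(\<exists>c. x = c * c) \<or> (\<exists>c. x = a * c * c)"
proof -
  obtain u v where w: "w = \<iota> u + \<iota> v * r" using repr by blast
  have "w * w = \<iota> (u * u + a * v * v) + \<iota> (2 * u * v) * r"
  proof -
    have "w * w = \<iota> u * \<iota> u + \<iota> v * \<iota> v * (r * r) + 2 * \<iota> u * \<iota> v * r"
      unfolding w by (simp add: algebra_simps)
    then show ?thesis by (simp add: r_sq i_add i_mult i_2 algebra_simps)
  qed
  then have "\<iota> (u * u + a * v * v - x) + \<iota> (2 * u * v) * r = 0"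
    using assms(2) by (simp add: i_diff algebra_simps)
  then have "u * u + a * v * v - x = 0" "2 * u * v = 0" using indep2 by blast+
  then show ?thesis using char by (auto simp: algebra_simps)
qed

lemma hilbert90: assumes "w * \<sigma> w = 1" shows "\<exists>u. u \<noteq> 0 \<and> w * u = \<sigma> u"
proof (cases "w = -1")
  case True
  then show ?thesis using r0 s_r by (intro exI[of _ r]) simp
next
  case False
  have w0: "w \<noteq> 0" using assms by auto
  have sw: "\<sigma> w = 1 / w" using assms w0 by (simp add: field_simps)
  have u0: "1 + w \<noteq> 0" using False by (metis add.commute add_eq_0_iff)
  define u where "u = 1 / (1 + w)"
  have "\<sigma> u = 1 / (1 + 1 / w)" unfolding u_def using u0 by (simp add: s_inv s_add s_1 sw)
  also have "\<dots> = w / (w + 1)" using w0 by (simp add: field_simps)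
  also have "\<dots> = w * u" unfolding u_def by (simp add: add.commute)
  finally show ?thesis using u0 unfolding u_def by (intro exI[of _ "1 / (1 + w)"]) simp
qed

end

context qe
begin

lemma mhom_i: "mhom \<iota>" using i_mult i_nz by (simp add: mhom_def)
lemma mhom_s: "mhom \<sigma>" using s_mult s_nz by (simp add: mhom_def)

definition J :: "'a sq \<Rightarrow> 'k sq" where "J = sqmap \<iota>"
definition Sg :: "'k sq \<Rightarrow> 'k sq" where "Sg = sqmap \<sigma>"
definition s :: "'k sq \<Rightarrow> 'k sq" where "s q = Sg q + q"
definition Nset :: "'a set" where "Nset = norm_group \<iota> \<sigma>"
definition NQ :: "'a sq set" where "NQ = cls ` Nset"

lemma lin_J: "Vector_Spaces.linear sc sc J" unfolding J_def using sqmap_lin[OF mhom_i] .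
lemma lin_Sg: "Vector_Spaces.linear sc sc Sg" unfolding Sg_def using sqmap_lin[OF mhom_s] .
lemma lin_s: "Vector_Spaces.linear sc sc s"
  using lin_Sg unfolding lin_iff s_def by (simp add: algebra_simps)

lemma J_cls: "x \<noteq> 0 \<Longrightarrow> J (cls x) = cls (\<iota> x)" unfolding J_def using sqmap_cls[OF mhom_i] .
lemma Sg_cls: "z \<noteq> 0 \<Longrightarrow> Sg (cls z) = cls (\<sigma> z)" unfolding Sg_def using sqmap_cls[OF mhom_s] .
lemma s_cls: assumes z: "z \<noteq> 0" shows "s (cls z) = cls (\<sigma> z * z)"
proof -
  have "s (cls z) = cls (\<sigma> z) + cls z" by (simp add: s_def Sg_cls[OF z])
  also have "\<dots> = cls (\<sigma> z * z)" by (rule cls_add[OF s_nz[OF z] z])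
  finally show ?thesis .
qed

lemma Nset_iff: "x \<in> Nset \<longleftrightarrow> (\<exists>z. z \<noteq> 0 \<and> \<iota> x = z * \<sigma> z)"
  unfolding Nset_def norm_group_def by simp

lemma N_nz: "x \<in> Nset \<Longrightarrow> x \<noteq> 0"
  unfolding Nset_iff by (metis i_0 mult_eq_0_iff s_nz)

lemma N_mult: "x \<in> Nset \<Longrightarrow> y \<in> Nset \<Longrightarrow> x * y \<in> Nset"
proof -
  assume "x \<in> Nset" "y \<in> Nset"
  then obtain z w where "z \<noteq> 0" "\<iota> x = z * \<sigma> z" "w \<noteq> 0" "\<iota> y = w * \<sigma> w" unfolding Nset_iff by blast
  then have "\<iota> (x * y) = (z * w) * \<sigma> (z * w)" "z * w \<noteq> 0" by (auto simp: i_mult s_mult algebra_simps)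
  then show ?thesis unfolding Nset_iff by blast
qed

lemma N_inv: "x \<in> Nset \<Longrightarrow> 1 / x \<in> Nset"
proof -
  assume "x \<in> Nset"
  then obtain z where z: "z \<noteq> 0" "\<iota> x = z * \<sigma> z" unfolding Nset_iff by blast
  then have "\<iota> (1 / x) = (1 / z) * \<sigma> (1 / z)" using N_nz[OF \<open>x \<in> Nset\<close>]
    by (simp add: i_inv s_inv)
  then show ?thesis unfolding Nset_iff using z(1) by (metis divide_eq_0_iff one_neq_zero)
qed

lemma N_sq: "c \<noteq> 0 \<Longrightarrow> c * c \<in> Nset"
  unfolding Nset_iff by (rule exI[of _ "\<iota> c"]) (simp add: i_nz s_fix i_mult)

lemma N_1: "1 \<in> Nset" using N_sq[of 1] by simp

lemma N_nega: "- a \<in> Nset"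
  unfolding Nset_iff using r0 by (intro exI[of _ r]) (simp add: s_r r_sq i_neg)

lemma NQ_subspace: "f2.subspace NQ"
  unfolding f2.subspace_def
proof (intro conjI ballI allI)
  have z: "0 \<in> NQ" unfolding NQ_def using N_1 cls_1 by (metis image_eqI)
  then show "0 \<in> NQ" .
  fix x y assume "x \<in> NQ" "y \<in> NQ"
  then obtain u v where "u \<in> Nset" "v \<in> Nset" "x = cls u" "y = cls v" unfolding NQ_def by blast
  then show "x + y \<in> NQ" unfolding NQ_def using cls_add N_nz N_mult by (metis image_eqI)
next
  fix c x assume "x \<in> NQ"
  moreover have "0 \<in> NQ" unfolding NQ_def using N_1 cls_1 by (metis image_eqI)
  ultimately show "sc c x \<in> NQ" by (simp add: sc_def)
qed

lemma range_s: "range s = J ` NQ"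
proof (intro Set.set_eqI iffI)
  fix q assume "q \<in> range s"
  then obtain p where p: "q = s p" by blast
  obtain z where z: "z \<noteq> 0" "p = cls z" using sq_cases by blast
  obtain x where x: "z * \<sigma> z = \<iota> x" using norm_in by blast
  then have "x \<in> Nset" unfolding Nset_iff using z by metis
  moreover have "q = J (cls x)" using p z x N_nz[OF \<open>x \<in> Nset\<close>]
    by (simp add: s_cls J_cls mult.commute)
  ultimately show "q \<in> J ` NQ" unfolding NQ_def by blast
next
  fix q assume "q \<in> J ` NQ"
  then obtain x where x: "x \<in> Nset" "q = J (cls x)" unfolding NQ_def by blast
  then obtain z where z: "z \<noteq> 0" "\<iota> x = z * \<sigma> z" unfolding Nset_iff by blast
  have "q = s (cls z)" using x z N_nz by (simp add: s_cls J_cls mult.commute)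
  then show "q \<in> range s" by blast
qed

lemma cls_a_nz: "cls a \<noteq> 0" using cls_eq0[OF a0] a_nsq by blast

lemma J_ker: "J q = 0 \<longleftrightarrow> q = 0 \<or> q = cls a"
proof -
  obtain x where x: "x \<noteq> 0" "q = cls x" using sq_cases by blast
  have "J q = 0 \<longleftrightarrow> (\<exists>w. \<iota> x = w * w)" using x by (simp add: J_cls cls_eq0 i_nz)
  also have "\<dots> \<longleftrightarrow> (\<exists>c. x = c * c) \<or> (\<exists>c. x = a * c * c)"
  proof
    assume "\<exists>w. \<iota> x = w * w" then show "(\<exists>c. x = c * c) \<or> (\<exists>c. x = a * c * c)" using sq_in_F x by blast
  next
    assume "(\<exists>c. x = c * c) \<or> (\<exists>c. x = a * c * c)"
    then show "\<exists>w. \<iota> x = w * w"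
    proof
      assume "\<exists>c. x = c * c" then show ?thesis using i_mult by blast
    next
      assume "\<exists>c. x = a * c * c"
      then obtain c where "x = a * c * c" by blast
      then have "\<iota> x = (r * \<iota> c) * (r * \<iota> c)" by (simp add: i_mult r_sq[symmetric] algebra_simps)
      then show ?thesis by blast
    qed
  qed
  also have "\<dots> \<longleftrightarrow> q = 0 \<or> q = cls a" using x cls_eq0 cls_eq[OF x(1) a0] by auto
  finally show ?thesis .
qed

lemma J_a: "J (cls a) = 0" using J_ker by simp

lemma a_NQ: "cls a \<in> NQ \<longleftrightarrow> - 1 \<in> Nset"
proof
  assume "cls a \<in> NQ"
  then obtain x where x: "x \<in> Nset" "cls a = cls x" unfolding NQ_def by blast
  then obtain w where w: "a = x * w * w" using cls_eq a0 N_nz by metis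
  then have "w \<noteq> 0" using a0 by auto
  then have "a \<in> Nset" using w N_mult[OF x(1) N_sq] by (simp add: mult.assoc)
  then have "a * (1 / (- a)) \<in> Nset" using N_mult N_inv N_nega by blast
  then show "- 1 \<in> Nset" using a0 by simp
next
  assume "- 1 \<in> Nset"
  then have "(- 1) * (- a) \<in> Nset" using N_mult N_nega by blast
  then show "cls a \<in> NQ" unfolding NQ_def by simp
qed

definition Ker :: "'k sq set" where "Ker = {q. s q = 0}"

lemma J_in_Ker: "J q \<in> Ker"
proof -
  obtain x where x: "x \<noteq> 0" "q = cls x" using sq_cases by blast
  have "s (J q) = cls (\<iota> x * \<iota> x)" using x by (simp add: J_cls s_cls i_nz s_fix)
  also have "\<dots> = 0" using cls_eq0[of "\<iota> x * \<iota> x"] i_nz[OF x(1)] by auto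
  finally show ?thesis unfolding Ker_def by simp
qed

lemma case1: assumes "z \<noteq> 0" "z * \<sigma> z = \<iota> (c * c)" "c \<noteq> 0" shows "cls z \<in> range J"
proof -
  define w where "w = z / \<iota> c"
  have ic: "\<iota> c \<noteq> 0" using i_nz assms(3) by simp
  have "w * \<sigma> w = (z * \<sigma> z) / (\<iota> c * \<iota> c)" unfolding w_def using ic by (simp add: s_div s_fix)
  also have "\<dots> = 1" using assms(2) ic by (simp add: i_mult)
  finally obtain u where u: "u \<noteq> 0" "w * u = \<sigma> u" using hilbert90 by blast
  obtain y where y: "u * \<sigma> u = \<iota> y" using norm_in by blast
  have w0: "w \<noteq> 0" unfolding w_def using assms ic by simp
  have y0: "y \<noteq> 0" using y u s_nz i_0 by (metis mult_eq_0_iff)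
  have "cls w = cls (\<sigma> u * u)"
  proof -
    have "\<sigma> u * u = w * u * u" using u by simp
    then show ?thesis using cls_eq[OF _ w0] u s_nz by (metis mult_eq_0_iff)
  qed
  also have "\<dots> = J (cls y)" using y y0 by (simp add: J_cls mult.commute)
  finally have "cls z = J (cls y) + J (cls c)"
    using cls_add[OF w0 ic] assms(3) unfolding w_def using ic by (simp add: J_cls)
  also have "\<dots> = J (cls y + cls c)" using lin_J lin_add by metis
  finally show ?thesis by blast
qed

lemma Ker_cases: assumes "q \<in> Ker" obtains z c where "z \<noteq> 0" "q = cls z" "c \<noteq> 0"
  "z * \<sigma> z = \<iota> (c * c) \<or> z * \<sigma> z = \<iota> (a * c * c)"
proof -
  obtain z where z: "z \<noteq> 0" "q = cls z" using sq_cases by blast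
  obtain x where x: "z * \<sigma> z = \<iota> x" using norm_in by blast
  have x0: "x \<noteq> 0" using x z s_nz i_0 by (metis mult_eq_0_iff)
  have "cls (\<sigma> z * z) = 0" using assms z s_cls unfolding Ker_def by simp
  then obtain w where "\<sigma> z * z = w * w" using cls_eq0 z s_nz by (metis mult_eq_0_iff)
  then have "\<iota> x = w * w" using x by (simp add: mult.commute)
  from sq_in_F[OF x0 this] obtain c where "x = c * c \<or> x = a * c * c" by blast
  moreover have "c \<noteq> 0" using calculation x0 by auto
  ultimately show ?thesis using that z x by blast
qed

lemma K2: assumes "q \<in> Ker" "- 1 \<notin> Nset" shows "q \<in> range J"
proof -
  obtain z c where zc: "z \<noteq> 0" "q = cls z" "c \<noteq> 0"
    "z * \<sigma> z = \<iota> (c * c) \<or> z * \<sigma> z = \<iota> (a * c * c)" using Ker_cases[OF assms(1)] by blast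
  show ?thesis
  proof (cases "z * \<sigma> z = \<iota> (c * c)")
    case True
    then show ?thesis using case1 zc by blast
  next
    case False
    then have n: "z * \<sigma> z = \<iota> (a * c * c)" using zc by blast
    define w where "w = z / (r * \<iota> c)"
    have d: "r * \<iota> c \<noteq> 0" using r0 i_nz zc by simp
    have "w * \<sigma> w = (z * \<sigma> z) / ((r * \<sigma> r) * (\<iota> c * \<iota> c))" unfolding w_def using d
      by (simp add: s_div s_mult s_fix algebra_simps)
    also have "\<dots> = \<iota> (- 1)" using n d i_nz a0 zc by (simp add: s_r r_sq i_mult i_neg i_1)
    finally have "- 1 \<in> Nset" unfolding Nset_iff w_def using zc d by (metis divide_eq_0_iff)
    then show ?thesis using assms by blast
  qed
qed

lemma K3: assumes "- 1 \<in> Nset"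
  shows "\<exists>\<epsilon>. \<epsilon> \<in> Ker \<and> \<epsilon> \<notin> range J \<and> (\<forall>q\<in>Ker. q \<in> range J \<or> q + \<epsilon> \<in> range J)"
proof -
  obtain w1 where w1: "w1 \<noteq> 0" "\<iota> (- 1) = w1 * \<sigma> w1" using assms unfolding Nset_iff by blast
  define e where "e = w1 * r"
  have e0: "e \<noteq> 0" unfolding e_def using w1 r0 by simp
  have ne: "e * \<sigma> e = \<iota> a"
  proof -
    have "e * \<sigma> e = (w1 * \<sigma> w1) * (r * \<sigma> r)" unfolding e_def by (simp add: s_mult algebra_simps)
    also have "\<dots> = \<iota> a"
    proof -
      have "w1 * \<sigma> w1 = -1" using w1(2) by (simp add: i_neg i_1)
      then show ?thesis by (simp add: s_r r_sq)
    qed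
    finally show ?thesis .
  qed
  have "cls e \<in> Ker"
  proof -
    have "s (cls e) = cls (\<iota> a)" using e0 ne by (simp add: s_cls mult.commute)
    also have "\<dots> = 0" using cls_eq0 i_nz a0 r_sq by metis
    finally show ?thesis unfolding Ker_def by simp
  qed
  moreover have "cls e \<notin> range J"
  proof
    assume "cls e \<in> range J"
    then obtain p where "cls e = J p" by blast
    moreover obtain y where y: "y \<noteq> 0" "p = cls y" using sq_cases by blast
    ultimately have "cls e = cls (\<iota> y)" by (simp add: J_cls)
    then obtain v where v: "e = \<iota> y * v * v" using cls_eq e0 i_nz y by metis
    obtain t where t: "v * \<sigma> v = \<iota> t" using norm_in by blast
    have "\<iota> a = (\<iota> y * \<iota> y) * (v * \<sigma> v) * (v * \<sigma> v)" using ne unfolding v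
      by (simp add: s_mult s_fix algebra_simps)
    also have "\<dots> = \<iota> ((y * t) * (y * t))" using t by (simp add: i_mult algebra_simps)
    finally show False using i_inj a_nsq by blast
  qed
  moreover have "q \<in> range J \<or> q + cls e \<in> range J" if q: "q \<in> Ker" for q
  proof -
    obtain z c where zc: "z \<noteq> 0" "q = cls z" "c \<noteq> 0"
      "z * \<sigma> z = \<iota> (c * c) \<or> z * \<sigma> z = \<iota> (a * c * c)" using Ker_cases[OF q] by blast
    show ?thesis
    proof (cases "z * \<sigma> z = \<iota> (c * c)")
      case True
      then show ?thesis using case1 zc by blast
    next
      case False
      then have n: "z * \<sigma> z = \<iota> (a * c * c)" using zc by blast
      define z' where "z' = z / e"
      have z'0: "z' \<noteq> 0" unfolding z'_def using zc e0 by simp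
      have "z' * \<sigma> z' = (z * \<sigma> z) / (e * \<sigma> e)" unfolding z'_def using e0
        by (simp add: s_div)
      also have "\<dots> = \<iota> (c * c)" using n ne i_nz a0 by (simp add: i_mult)
      finally have "cls z' \<in> range J" using case1 z'0 zc by blast
      moreover have "q + cls e = cls z'"
      proof -
        have "z = z' * e" unfolding z'_def using e0 by simp
        then have "q = cls z' + cls e" using zc(2) cls_add[OF z'0 e0] by simp
        then show ?thesis by (simp add: add.assoc add_self)
      qed
      ultimately show ?thesis by simp
    qed
  qed
  ultimately show ?thesis by blast
qed

end

lemma lepoll_ordLeq: "A \<lesssim> B \<longleftrightarrow> |A| \<le>o |B|"
  by (simp add: lepoll_def card_of_ordLeq)

lemma fin_plus_inf: assumes "finite A" "infinite X" shows "A <+> X \<approx> X"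
proof -
  have "|A| \<le>o |X|" using finite_lepoll_infinite[OF assms(2,1)] lepoll_ordLeq by blast
  then have "|A <+> X| =o |X|" using card_of_Plus_infinite2[OF assms(2)] by blast
  then show ?thesis using eqpoll_iff_card_of_ordIso by blast
qed

lemma plus_cancel: assumes "{..<n::nat} <+> X \<approx> {..<n} <+> Y" shows "X \<approx> Y"
proof (cases "finite X")
  case True
  then have "finite ({..<n} <+> Y)" using assms eqpoll_finite_iff by (metis finite_Plus_iff finite_lessThan)
  then have fY: "finite Y" by simp
  have "card ({..<n} <+> X) = card ({..<n} <+> Y)" using assms True fY eqpoll_iff_card by (metis finite_Plus_iff finite_lessThan)
  then have "card X = card Y" using True fY by (simp add: card_Plus)
  then show ?thesis using True fY eqpoll_iff_card by blast
next
  case False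
  then have "infinite ({..<n} <+> X)" by simp
  then have "infinite ({..<n} <+> Y)" using assms eqpoll_finite_iff by blast
  then have fY: "infinite Y" by simp
  have "X \<approx> {..<n} <+> X" using fin_plus_inf[OF _ False] eqpoll_sym by blast
  also have "\<dots> \<approx> {..<n} <+> Y" by (rule assms)
  also have "\<dots> \<approx> Y" using fin_plus_inf[OF _ fY] by blast
  finally show ?thesis .
qed

lemma plus_assoc_eqpoll: "A <+> (B <+> C) \<approx> (A <+> B) <+> C"
  using card_of_Plus_assoc[of A B C] eqpoll_iff_card_of_ordIso eqpoll_sym by blast

lemma lessThan_plus: "{..<m::nat} <+> {..<n::nat} \<approx> {..<m + n}"
  by (simp add: eqpoll_iff_card card_Plus)

lemma plus_nat_assoc: "{..<m::nat} <+> ({..<n::nat} <+> X) \<approx> {..<m + n} <+> X"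
proof -
  have "{..<m::nat} <+> ({..<n::nat} <+> X) \<approx> ({..<m} <+> {..<n}) <+> X" by (rule plus_assoc_eqpoll)
  also have "\<dots> \<approx> {..<m + n} <+> X" using lessThan_plus sum_eqpoll_cong by blast
  finally show ?thesis .
qed

lemma plus0: "{..<0::nat} <+> X \<approx> X"
proof -
  have "{..<0::nat} <+> X = Inr ` X" by (auto simp: Plus_def)
  then show ?thesis by (simp add: inj_on_image_eqpoll_self)
qed

lemma insert_plus1: assumes "e \<notin> X" shows "insert e X \<approx> {..<1::nat} <+> X"
proof -
  define g where "g y = (if y = e then Inl (0::nat) else Inr y)" for y :: 'a
  have "bij_betw g (insert e X) ({..<1::nat} <+> X)"
    unfolding bij_betw_def inj_on_def g_def using assms by (auto simp: Plus_def image_iff)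
  then show ?thesis unfolding eqpoll_def by blast
qed

lemma plus_cong_right: "X \<approx> Y \<Longrightarrow> A <+> X \<approx> A <+> Y"
  using sum_eqpoll_cong by blast

context qe
begin

lemma J_inj: assumes "cls a \<notin> f2.span S" shows "inj_on J (f2.span S)"
proof (rule inj_onI)
  fix x y assume xy: "x \<in> f2.span S" "y \<in> f2.span S" "J x = J y"
  then have "J (x + y) = 0" using lin_add[OF lin_J] by (simp add: add_self)
  then have "x + y = 0 \<or> x + y = cls a" using J_ker by blast
  moreover have "x + y \<in> f2.span S" using xy f2.span_add by blast
  ultimately show "x = y" using assms f2_eq_iff by metis
qed

lemma J_span_insert: "J ` f2.span (insert (cls a) S) = J ` f2.span S"
proof
  show "J ` f2.span S \<subseteq> J ` f2.span (insert (cls a) S)" by (intro image_mono f2.span_mono) auto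
next
  show "J ` f2.span (insert (cls a) S) \<subseteq> J ` f2.span S"
  proof
    fix v assume "v \<in> J ` f2.span (insert (cls a) S)"
    then obtain x y where xy: "x \<in> f2.span {cls a}" "y \<in> f2.span S" "v = J (x + y)"
      using f2.span_Un[of "{cls a}" S] by auto
    have "x = 0 \<or> x = cls a" using xy(1) unfolding f2.span_singleton by (auto simp: sc_def)
    then have "J x = 0" using J_a lin_zero[OF lin_J] by auto
    then have "v = J y" using xy(3) lin_add[OF lin_J] by simp
    then show "v \<in> J ` f2.span S" using xy(2) by blast
  qed
qed

lemma Ker_subspace: "f2.subspace Ker" unfolding Ker_def by (rule subspace_ker[OF lin_s])

lemma not_in_span_delete: "f2.independent B \<Longrightarrow> x \<in> B \<Longrightarrow> x \<notin> f2.span (B - {x})"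
  using f2.dependent_def by blast

lemma invariants:
  "\<exists>Bn Dq Bf C. f2.independent (Bn \<union> Dq) \<and> Bn \<inter> Dq = {} \<and> f2.span Bn = NQ \<and> f2.span (Bn \<union> Dq) = UNIV \<and>
     is_inv s Bf C \<and> Bn \<approx> {..<Upsilon \<iota> \<sigma>} <+> Bf \<and> {..<1::nat} <+> C \<approx> {..<2 * Upsilon \<iota> \<sigma>} <+> Dq"
proof (cases "- 1 \<in> Nset")
  case True
  then have ups: "Upsilon \<iota> \<sigma> = 1" unfolding Upsilon_def Nset_def by simp
  have aNQ: "cls a \<in> NQ" using a_NQ True by blast
  have ia: "f2.independent {cls a}" using cls_a_nz by simp
  obtain Bn where Bn: "{cls a} \<subseteq> Bn" "Bn \<subseteq> NQ" "f2.independent Bn" "NQ \<subseteq> f2.span Bn"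
    using f2.maximal_independent_subset_extend[of "{cls a}" NQ] aNQ ia by blast
  have spBn: "f2.span Bn = NQ" using span_of_subspace[OF Bn(2,4) NQ_subspace] .
  obtain B' where B': "Bn \<subseteq> B'" "B' \<subseteq> UNIV" "f2.independent B'" "UNIV \<subseteq> f2.span B'"
    by (rule f2.maximal_independent_subset_extend[OF subset_UNIV Bn(3)])
  define Dq where "Dq = B' - Bn"
  define R where "R = B' - {cls a}"
  have aB': "cls a \<in> B'" using Bn(1) B'(1) by blast
  have aR: "cls a \<notin> f2.span R" unfolding R_def using not_in_span_delete[OF B'(3) aB'] .
  have injR: "inj_on J (f2.span R)" using J_inj[OF aR] .
  have injR': "inj_on J R" using injR f2.span_superset inj_on_subset by blast
  have indR: "f2.independent R" unfolding R_def using B'(3) f2.independent_mono by blast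
  have spR: "f2.span (J ` R) = range J"
  proof -
    have "f2.span (J ` R) = J ` f2.span R" by (rule lin_span_image[OF lin_J])
    also have "\<dots> = J ` f2.span (insert (cls a) R)" by (rule J_span_insert[symmetric])
    also have "insert (cls a) R = B'" unfolding R_def using aB' by blast
    finally show ?thesis using B'(4) by auto
  qed
  obtain \<epsilon> where eps: "\<epsilon> \<in> Ker" "\<epsilon> \<notin> range J" "\<forall>q\<in>Ker. q \<in> range J \<or> q + \<epsilon> \<in> range J"
    using K3[OF True] by blast
  define Bf where "Bf = J ` (Bn - {cls a})"
  define C where "C = insert \<epsilon> (J ` Dq)"
  have RBD: "R = (Bn - {cls a}) \<union> Dq" unfolding R_def Dq_def using Bn(1) B'(1) by blast
  have subR1: "Bn - {cls a} \<subseteq> R" and subR2: "Dq \<subseteq> R" unfolding RBD by auto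
  have iJR: "f2.independent (J ` R)" using lin_indep_image[OF lin_J indR injR] .
  have BfC: "Bf \<union> C = insert \<epsilon> (J ` R)" unfolding Bf_def C_def RBD by blast
  have inv: "is_inv s Bf C"
    unfolding is_inv_def
  proof (intro conjI)
    show "f2.independent Bf" unfolding Bf_def using f2.independent_mono[OF iJR] subR1 by blast
    have "f2.span Bf = J ` f2.span (Bn - {cls a})" unfolding Bf_def by (rule lin_span_image[OF lin_J])
    also have "\<dots> = J ` f2.span (insert (cls a) (Bn - {cls a}))" by (rule J_span_insert[symmetric])
    also have "insert (cls a) (Bn - {cls a}) = Bn" using Bn(1) by blast
    finally show "f2.span Bf = range s" using spBn range_s by simp
    show "f2.independent (Bf \<union> C)" unfolding BfC
      using f2.independent_insertI[OF _ iJR] spR eps(2) by blast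
    show "Bf \<inter> C = {}"
    proof -
      have "J ` (Bn - {cls a}) \<inter> J ` Dq = J ` ((Bn - {cls a}) \<inter> Dq)"
        using inj_on_image_Int[OF injR' subR1 subR2] by simp
      also have "\<dots> = {}" unfolding Dq_def by blast
      finally show ?thesis unfolding Bf_def C_def using eps(2) by blast
    qed
    show "f2.span (Bf \<union> C) = {x. s x = 0}"
    proof
      show "f2.span (Bf \<union> C) \<subseteq> {x. s x = 0}"
        unfolding BfC using eps(1) J_in_Ker Ker_subspace
        by (intro f2.span_minimal) (auto simp: Ker_def)
    next
      show "{x. s x = 0} \<subseteq> f2.span (Bf \<union> C)"
      proof
        fix q assume "q \<in> {x. s x = 0}"
        then have "q \<in> Ker" unfolding Ker_def by simp
        have sub: "f2.span (J ` R) \<subseteq> f2.span (Bf \<union> C)" unfolding BfC by (intro f2.span_mono) auto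
        have e: "\<epsilon> \<in> f2.span (Bf \<union> C)" unfolding BfC by (intro f2.span_base) auto
        show "q \<in> f2.span (Bf \<union> C)"
        proof (cases "q \<in> range J")
          case True
          then show ?thesis using sub spR by blast
        next
          case False
          then have "q + \<epsilon> \<in> f2.span (Bf \<union> C)" using eps(3) \<open>q \<in> Ker\<close> sub spR by blast
          then have "q + \<epsilon> + \<epsilon> \<in> f2.span (Bf \<union> C)" using e f2.span_add by blast
          then show ?thesis by (simp add: add.assoc add_self)
        qed
      qed
    qed
  qed
  have c1: "Bn \<approx> {..<Upsilon \<iota> \<sigma>} <+> Bf"
  proof -
    have "Bn = insert (cls a) (Bn - {cls a})" using Bn(1) by blast
    then have "Bn \<approx> {..<1::nat} <+> (Bn - {cls a})" using insert_plus1[of "cls a" "Bn - {cls a}"] by simp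
    also have "\<dots> \<approx> {..<1::nat} <+> Bf"
    proof (rule plus_cong_right)
      have "inj_on J (Bn - {cls a})" using inj_on_subset[OF injR' subR1] .
      then show "Bn - {cls a} \<approx> Bf" unfolding Bf_def using eqpoll_sym inj_on_image_eqpoll_self by blast
    qed
    finally show ?thesis using ups by simp
  qed
  have c2: "{..<1::nat} <+> C \<approx> {..<2 * Upsilon \<iota> \<sigma>} <+> Dq"
  proof -
    have "C \<approx> {..<1::nat} <+> J ` Dq" unfolding C_def using eps(2) by (intro insert_plus1) blast
    also have "\<dots> \<approx> {..<1::nat} <+> Dq"
    proof (rule plus_cong_right)
      have "inj_on J Dq" using inj_on_subset[OF injR' subR2] .
      then show "J ` Dq \<approx> Dq" using inj_on_image_eqpoll_self by blast
    qed
    finally have "{..<1::nat} <+> C \<approx> {..<1::nat} <+> ({..<1::nat} <+> Dq)" by (rule plus_cong_right)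
    also have "\<dots> \<approx> {..<1 + 1::nat} <+> Dq" by (rule plus_nat_assoc)
    also have "(1 + 1::nat) = 2 * Upsilon \<iota> \<sigma>" using ups by simp
    finally show ?thesis .
  qed
  have "f2.independent (Bn \<union> Dq)" "Bn \<inter> Dq = {}" "f2.span (Bn \<union> Dq) = UNIV"
    unfolding Dq_def using B' by (auto simp: Un_absorb1 Un_Diff_cancel)
  then show ?thesis using spBn inv c1 c2 by blast
next
  case False
  then have ups: "Upsilon \<iota> \<sigma> = 0" unfolding Upsilon_def Nset_def by simp
  have aNQ: "cls a \<notin> NQ" using a_NQ False by blast
  obtain Bn where Bn: "Bn \<subseteq> NQ" "f2.independent Bn" "NQ \<subseteq> f2.span Bn"
    using f2.maximal_independent_subset[of NQ] by blast
  have spBn: "f2.span Bn = NQ" using span_of_subspace[OF Bn(1,3) NQ_subspace] .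
  have ia: "f2.independent (insert (cls a) Bn)" using f2.independent_insertI[OF _ Bn(2)] aNQ spBn by blast
  obtain B' where B': "insert (cls a) Bn \<subseteq> B'" "B' \<subseteq> UNIV" "f2.independent B'" "UNIV \<subseteq> f2.span B'"
    by (rule f2.maximal_independent_subset_extend[OF subset_UNIV ia])
  define Dq where "Dq = B' - Bn"
  define R where "R = B' - {cls a}"
  have aB': "cls a \<in> B'" using B'(1) by blast
  have aBn: "cls a \<notin> Bn" using aNQ Bn(1) by blast
  have aR: "cls a \<notin> f2.span R" unfolding R_def using not_in_span_delete[OF B'(3) aB'] .
  have injR: "inj_on J (f2.span R)" using J_inj[OF aR] .
  have injR': "inj_on J R" using injR f2.span_superset inj_on_subset by blast
  have indR: "f2.independent R" unfolding R_def using B'(3) f2.independent_mono by blast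
  have spR: "f2.span (J ` R) = range J"
  proof -
    have "f2.span (J ` R) = J ` f2.span R" by (rule lin_span_image[OF lin_J])
    also have "\<dots> = J ` f2.span (insert (cls a) R)" by (rule J_span_insert[symmetric])
    also have "insert (cls a) R = B'" unfolding R_def using aB' by blast
    finally show ?thesis using B'(4) by auto
  qed
  define Bf where "Bf = J ` Bn"
  define C where "C = J ` (Dq - {cls a})"
  have RBD: "R = Bn \<union> (Dq - {cls a})" unfolding R_def Dq_def using B'(1) aBn by blast
  have subR1: "Bn \<subseteq> R" and subR2: "Dq - {cls a} \<subseteq> R" unfolding RBD by auto
  have iJR: "f2.independent (J ` R)" using lin_indep_image[OF lin_J indR injR] .
  have BfC: "Bf \<union> C = J ` R" unfolding Bf_def C_def RBD by blast
  have inv: "is_inv s Bf C"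
    unfolding is_inv_def
  proof (intro conjI)
    show "f2.independent Bf" unfolding Bf_def using f2.independent_mono[OF iJR] subR1 by blast
    have "f2.span Bf = J ` f2.span Bn" unfolding Bf_def by (rule lin_span_image[OF lin_J])
    then show "f2.span Bf = range s" using spBn range_s by simp
    show "f2.independent (Bf \<union> C)" unfolding BfC by (rule iJR)
    show "Bf \<inter> C = {}"
    proof -
      have "J ` Bn \<inter> J ` (Dq - {cls a}) = J ` (Bn \<inter> (Dq - {cls a}))"
        using inj_on_image_Int[OF injR' subR1 subR2] by simp
      also have "\<dots> = {}" unfolding Dq_def by blast
      finally show ?thesis unfolding Bf_def C_def by blast
    qed
    show "f2.span (Bf \<union> C) = {x. s x = 0}"
      unfolding BfC spR using J_in_Ker K2[OF _ False] by (auto simp: Ker_def)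
  qed
  have c1: "Bn \<approx> {..<Upsilon \<iota> \<sigma>} <+> Bf"
  proof -
    have "Bn \<approx> Bf" unfolding Bf_def using inj_on_subset[OF injR' subR1] eqpoll_sym inj_on_image_eqpoll_self
      by blast
    also have "\<dots> \<approx> {..<0::nat} <+> Bf" using plus0 eqpoll_sym by blast
    finally show ?thesis using ups by simp
  qed
  have c2: "{..<1::nat} <+> C \<approx> {..<2 * Upsilon \<iota> \<sigma>} <+> Dq"
  proof -
    have "{..<1::nat} <+> C \<approx> {..<1::nat} <+> (Dq - {cls a})"
    proof (rule plus_cong_right)
      have "inj_on J (Dq - {cls a})" using inj_on_subset[OF injR' subR2] .
      then show "C \<approx> Dq - {cls a}" unfolding C_def using inj_on_image_eqpoll_self by blast
    qed
    also have "\<dots> \<approx> insert (cls a) (Dq - {cls a})" using insert_plus1[of "cls a" "Dq - {cls a}"] by (simp add: eqpoll_sym)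
    also have "insert (cls a) (Dq - {cls a}) = Dq" unfolding Dq_def using aB' aBn by blast
    also have "Dq \<approx> {..<0::nat} <+> Dq" using plus0 eqpoll_sym by blast
    finally show ?thesis using ups by simp
  qed
  have "f2.independent (Bn \<union> Dq)" "Bn \<inter> Dq = {}" "f2.span (Bn \<union> Dq) = UNIV"
    unfolding Dq_def using B' by (auto simp: Un_absorb1 Un_Diff_cancel)
  then show ?thesis using spBn inv c1 c2 by blast
qed

end

definition grp :: "'a::field set \<Rightarrow> bool" where
  "grp H \<longleftrightarrow> (\<forall>x\<in>H. x \<noteq> 0) \<and> 1 \<in> H \<and> (\<forall>x\<in>H. \<forall>y\<in>H. x * y \<in> H) \<and> (\<forall>x\<in>H. 1 / x \<in> H)"

lemma grp_div: "grp H \<Longrightarrow> x \<in> H \<Longrightarrow> y \<in> H \<Longrightarrow> x / y \<in> H"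
  unfolding grp_def by (metis divide_inverse inverse_eq_divide)

lemma coset_mem: "grp H \<Longrightarrow> x \<in> x *o H"
  unfolding grp_def elt_set_times_def by (auto intro!: bexI[of _ 1])

lemma coset_absorb: assumes "grp H" "h \<in> H" shows "(x * h) *o H = x *o H"
proof (intro Set.set_eqI iffI)
  fix y assume "y \<in> (x * h) *o H"
  then obtain k where "k \<in> H" "y = x * (h * k)" unfolding elt_set_times_def by (auto simp: mult.assoc)
  then show "y \<in> x *o H" using assms unfolding grp_def elt_set_times_def by blast
next
  fix y assume "y \<in> x *o H"
  then obtain k where k: "k \<in> H" "y = x * k" unfolding elt_set_times_def by auto
  have h0: "h \<noteq> 0" using assms unfolding grp_def by blast
  have "k / h \<in> H" using grp_div assms k by blast
  moreover have "y = (x * h) * (k / h)" using k h0 by simp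
  ultimately show "y \<in> (x * h) *o H" unfolding elt_set_times_def by blast
qed

lemma coset_eq: assumes "grp H" "x \<noteq> 0" "y \<noteq> 0" shows "x *o H = y *o H \<longleftrightarrow> x / y \<in> H"
proof
  assume "x *o H = y *o H"
  then have "x \<in> y *o H" using coset_mem[OF assms(1)] by blast
  then obtain k where "k \<in> H" "x = y * k" unfolding elt_set_times_def by auto
  then show "x / y \<in> H" using assms(3) by simp
next
  assume "x / y \<in> H"
  then have "(y * (x / y)) *o H = y *o H" using coset_absorb[OF assms(1)] by blast
  then show "x *o H = y *o H" using assms(3) by simp
qed

lemma HH: assumes "grp H" shows "H * H = H"
proof
  show "H * H \<subseteq> H" using assms unfolding grp_def set_times_def by blast
  show "H \<subseteq> H * H" unfolding set_times_def using assms unfolding grp_def by force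
qed

lemma coset_mult: assumes "grp H" shows "(x *o H) * (y *o H) = (x * y) *o H"
  by (simp add: set_times_rearrange HH[OF assms])

lemma H_coset: assumes "grp H" shows "H * (x *o H) = x *o H"
proof -
  have "H = 1 *o H" by (simp add: elt_set_times_def)
  then have "H * (x *o H) = (1 * x) *o H" using coset_mult[OF assms, of 1 x] by metis
  then show ?thesis by simp
qed

definition gam :: "'a::field set \<Rightarrow> 'a sq \<Rightarrow> 'a set" where
  "gam H q = (SOME x. x \<noteq> 0 \<and> q = cls x) *o H"

lemma sqs_in: "x \<noteq> 0 \<Longrightarrow> x * x \<in> (squares_of_field :: 'a::field set)"
  unfolding squares_of_field_def by blast

lemma gam_cls: assumes "grp H" "squares_of_field \<subseteq> H" "x \<noteq> 0" shows "gam H (cls x) = x *o H"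
proof -
  define x' where "x' = (SOME x'. x' \<noteq> 0 \<and> cls x = cls x')"
  have x': "x' \<noteq> 0" "cls x = cls x'" unfolding x'_def using someI_ex[OF cls_surj[of "cls x"]] by auto
  then obtain w where w: "x' = x * w * w" using cls_eq assms(3) by metis
  then have "w \<noteq> 0" using x' by auto
  then have "w * w \<in> H" using assms(2) sqs_in by blast
  then have "(x * (w * w)) *o H = x *o H" by (rule coset_absorb[OF assms(1)])
  then show ?thesis unfolding gam_def x'_def[symmetric] using w by (simp add: mult.assoc)
qed

lemma gam_add: assumes "grp H" "squares_of_field \<subseteq> H" shows "gam H (p + q) = gam H p * gam H q"
proof -
  obtain x y where xy: "x \<noteq> 0" "y \<noteq> 0" "p = cls x" "q = cls y" by (metis sq_cases)
  then show ?thesis using assms by (simp add: cls_add gam_cls coset_mult)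
qed

lemma gam_0: assumes "grp H" "squares_of_field \<subseteq> H" shows "gam H 0 = H"
  using gam_cls[OF assms, of 1] by (simp add: cls_1 elt_set_times_def)

lemma bij_transfer:
  assumes "bij_betw f1 A A'" "bij_betw f2 A Q" "\<And>Y. Y \<in> A \<Longrightarrow> h (f1 Y) = f2 Y"
  shows "bij_betw h A' Q"
proof -
  have "bij_betw (f2 \<circ> inv_into A f1) A' Q"
    using bij_betw_trans[OF bij_betw_inv_into[OF assms(1)] assms(2)] .
  moreover have "\<And>X. X \<in> A' \<Longrightarrow> (f2 \<circ> inv_into A f1) X = h X"
  proof -
    fix X assume "X \<in> A'"
    then have "inv_into A f1 X \<in> A" "f1 (inv_into A f1 X) = X"
      using assms(1) by (auto simp: bij_betw_def inv_into_into f_inv_into_f)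
    then show "(f2 \<circ> inv_into A f1) X = h X" using assms(3) by (metis comp_apply)
  qed
  ultimately show ?thesis using bij_betw_cong by blast
qed

lemma bij_image_Fpow: assumes "inj_on g D" shows "bij_betw (image g) (Fpow D) (Fpow (g ` D))"
proof -
  have "inj_on (image g) (Fpow D)" using assms by (rule inj_on_image_Fpow)
  moreover have "image g ` Fpow D = Fpow (g ` D)"
  proof (intro Set.set_eqI iffI)
    fix X assume "X \<in> image g ` Fpow D" then show "X \<in> Fpow (g ` D)" by (auto simp: Fpow_def)
  next
    fix X assume X: "X \<in> Fpow (g ` D)"
    define Y where "Y = {d\<in>D. g d \<in> X}"
    have "g ` Y = X" using X unfolding Y_def Fpow_def by auto
    moreover have "finite Y"
    proof -
      have "inj_on g Y" using assms unfolding Y_def by (rule inj_on_subset) auto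
      then show ?thesis using \<open>g ` Y = X\<close> X by (metis Fpow_def finite_imageD mem_Collect_eq)
    qed
    ultimately show "X \<in> image g ` Fpow D" unfolding Y_def Fpow_def by auto
  qed
  ultimately show ?thesis by (simp add: bij_betw_def)
qed

lemma F2_basis_Fpow: "F2_basis H Q B \<Longrightarrow> Fpow B \<approx> Q"
  unfolding F2_basis_def eqpoll_def Fpow_def by (metis (no_types, lifting) Collect_cong)

lemma quot_basis:
  fixes U H :: "'a::field set"
  assumes gU: "grp U" and gH: "grp H" and HU: "H \<subseteq> U" and sqH: "squares_of_field \<subseteq> H"
    and ind: "f2.independent (Bh \<union> D)" and disj: "Bh \<inter> D = {}"
    and spH: "f2.span Bh = cls ` H" and spU: "f2.span (Bh \<union> D) = cls ` U"
  shows "(\<exists>B. F2_basis H (quot U H) B) \<and> (\<forall>B. F2_basis H (quot U H) B \<longrightarrow> B \<approx> D)"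
proof -
  have nzU: "\<And>u. u \<in> U \<Longrightarrow> u \<noteq> 0" using gU unfolding grp_def by blast
  have spD: "f2.span D \<subseteq> cls ` U" using spU f2.span_mono by blast
  have gb: "bij_betw (gam H) (f2.span D) (quot U H)"
    unfolding bij_betw_def
  proof (intro conjI)
    show "inj_on (gam H) (f2.span D)"
    proof (rule inj_onI)
      fix p q assume pq: "p \<in> f2.span D" "q \<in> f2.span D" "gam H p = gam H q"
      obtain x y where xy: "x \<in> U" "y \<in> U" "p = cls x" "q = cls y" using pq(1,2) spD by blast
      have x0: "x \<noteq> 0" and y0: "y \<noteq> 0" using xy nzU by auto
      have "x *o H = y *o H" using pq(3) xy gam_cls[OF gH sqH] x0 y0 by simp
      then have xyH: "x / y \<in> H" using coset_eq[OF gH x0 y0] by simp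
      have "p + q = cls (x * y)" using xy x0 y0 cls_add by simp
      also have "\<dots> = cls (x / y)"
      proof -
        have "x * y = (x / y) * y * y" using y0 by simp
        then show ?thesis using cls_eq x0 y0 by (metis divide_eq_0_iff mult_eq_0_iff)
      qed
      finally have "p + q \<in> f2.span Bh" using spH xyH by simp
      moreover have "p + q \<in> f2.span D" using pq f2.span_add by blast
      ultimately have "p + q = 0" using span_disj[OF ind disj] by blast
      then show "p = q" using f2_eq_iff by blast
    qed
    show "gam H ` f2.span D = quot U H"
    proof (intro Set.set_eqI iffI)
      fix A assume "A \<in> gam H ` f2.span D"
      then obtain p where p: "p \<in> f2.span D" "A = gam H p" by blast
      then obtain x where "x \<in> U" "p = cls x" using spD by blast
      then show "A \<in> quot U H" using p gam_cls[OF gH sqH] nzU unfolding quot_def by auto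
    next
      fix A assume "A \<in> quot U H"
      then obtain u where u: "u \<in> U" "A = u *o H" unfolding quot_def by blast
      have "cls u \<in> f2.span (Bh \<union> D)" using spU u by simp
      then obtain h d where hd: "h \<in> f2.span Bh" "d \<in> f2.span D" "cls u = h + d" unfolding f2.span_Un by blast
      obtain h' where h': "h' \<in> H" "h = cls h'" using hd(1) spH by auto
      have h0: "h' \<noteq> 0" using h' gH unfolding grp_def by blast
      have "d = cls u + h" using hd(3) by (metis add.commute f2_add_self_left)
      also have "\<dots> = cls (u * h')" using h' h0 nzU[OF u(1)] cls_add by simp
      finally have "gam H d = (u * h') *o H" using gam_cls[OF gH sqH] h0 nzU[OF u(1)] by simp
      also have "\<dots> = A" using coset_absorb[OF gH h'(1)] u by simp
      finally show "A \<in> gam H ` f2.span D" using hd(2) by blast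
    qed
  qed
  have indD: "f2.independent D" using ind f2.independent_mono by blast
  have FpD: "Fpow D \<approx> quot U H"
    using span_eqpoll[OF indD] gb eqpoll_def eqpoll_sym eqpoll_trans by blast
  have part2: "\<forall>B. F2_basis H (quot U H) B \<longrightarrow> B \<approx> D"
  proof (intro allI impI)
    fix B assume "F2_basis H (quot U H) B"
    then have "Fpow B \<approx> Fpow D" using F2_basis_Fpow FpD eqpoll_sym eqpoll_trans by blast
    then show "B \<approx> D" by (rule Fpow_eqpoll_imp)
  qed
  have injD: "inj_on (gam H) D" using inj_on_subset[OF bij_betw_imp_inj_on[OF gb] f2.span_superset] .
  have key: "H * \<Prod>(gam H ` Y) = gam H (\<Sum>Y)" if Y: "Y \<in> Fpow D" for Y
  proof -
    have fY: "finite Y" using Y by (simp add: Fpow_def)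
    have "\<Prod>(gam H ` Y) = (\<Prod>y\<in>Y. gam H y)"
      using Y injD by (subst prod.reindex) (auto simp: Fpow_def intro: inj_on_subset)
    moreover have "H * (\<Prod>y\<in>Y. gam H y) = gam H (\<Sum>Y)"
      using fY
    proof (induction Y rule: finite_induct)
      case empty
      then show ?case using gam_0[OF gH sqH] by (simp del: set_one)
    next
      case (insert y Y)
      have "H * (\<Prod>y\<in>insert y Y. gam H y) = H * (gam H y * (\<Prod>y\<in>Y. gam H y))"
        using insert by (simp del: set_one)
      also have "\<dots> = gam H y * (H * (\<Prod>y\<in>Y. gam H y))" by (rule mult.left_commute)
      also have "\<dots> = gam H y * gam H (\<Sum>Y)" using insert.IH by (simp del: set_one)
      also have "\<dots> = gam H (y + \<Sum>Y)" using gam_add[OF gH sqH] by simp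
      finally show ?case using insert by simp
    qed
    ultimately show ?thesis by simp
  qed
  have "F2_basis H (quot U H) (gam H ` D)"
    unfolding F2_basis_def
  proof (intro conjI)
    show "gam H ` D \<subseteq> quot U H"
    proof -
      have "gam H ` D \<subseteq> gam H ` f2.span D" by (rule image_mono[OF f2.span_superset])
      then show ?thesis using bij_betw_imp_surj_on[OF gb] by simp
    qed
    have b1: "bij_betw (image (gam H)) (Fpow D) (Fpow (gam H ` D))" using bij_image_Fpow[OF injD] .
    have b2: "bij_betw (\<lambda>Y. gam H (\<Sum>Y)) (Fpow D) (quot U H)"
      using bij_betw_trans[OF span_bij[OF indD] gb] by (simp add: comp_def)
    have "bij_betw (\<lambda>X. H * \<Prod>X) (Fpow (gam H ` D)) (quot U H)"
      by (rule bij_transfer[OF b1 b2, of "\<lambda>X. H * \<Prod>X"]) (rule key)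
    moreover have "Fpow (gam H ` D) = {X. finite X \<and> X \<subseteq> gam H ` D}" by (auto simp: Fpow_def)
    ultimately show "bij_betw (\<lambda>X. H * \<Prod>X) {X. finite X \<and> X \<subseteq> gam H ` D} (quot U H)" by simp
  qed
  then show ?thesis using part2 by blast
qed

lemma grp_sq: "grp (squares_of_field :: 'a::field set)"
  unfolding grp_def squares_of_field_def
proof (intro conjI ballI)
  show "(1::'a) \<in> {x * x |x. x \<noteq> 0}" by (auto intro!: exI[of _ 1])
next
  fix x assume "x \<in> {x * x |x::'a. x \<noteq> 0}" then show "x \<noteq> 0" by auto
next
  fix x y assume "x \<in> {x * x |x::'a. x \<noteq> 0}" "y \<in> {x * x |x::'a. x \<noteq> 0}"
  then obtain u v where "u \<noteq> 0" "v \<noteq> 0" "x = u * u" "y = v * v" by auto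
  then show "x * y \<in> {x * x |x::'a. x \<noteq> 0}" by (auto intro!: exI[of _ "u * v"] simp: algebra_simps)
next
  fix x assume "x \<in> {x * x |x::'a. x \<noteq> 0}"
  then obtain u where "u \<noteq> 0" "x = u * u" by auto
  then show "1 / x \<in> {x * x |x::'a. x \<noteq> 0}" by (auto intro!: exI[of _ "1 / u"])
qed

lemma grp_units: "grp (units_of_field :: 'a::field set)"
  unfolding grp_def units_of_field_def by auto

definition rho :: "'a::field sq \<Rightarrow> 'a set" where "rho = gam squares_of_field"

lemma rho_cls: "x \<noteq> 0 \<Longrightarrow> rho (cls x) = x *o squares_of_field"
  unfolding rho_def using gam_cls[OF grp_sq] by blast

lemma rho_add: "rho (p + q) = rho p * rho q"
  unfolding rho_def using gam_add[OF grp_sq] by blast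

lemma rho_bij: "bij_betw (rho :: 'a::field sq \<Rightarrow> _) UNIV (quot units_of_field squares_of_field)"
  unfolding bij_betw_def
proof
  show "inj (rho :: 'a sq \<Rightarrow> _)"
  proof (rule injI)
    fix p q :: "'a sq" assume pq: "rho p = rho q"
    obtain x y where xy: "x \<noteq> 0" "y \<noteq> 0" "p = cls x" "q = cls y" by (metis sq_cases)
    then have "x *o squares_of_field = y *o squares_of_field" using pq rho_cls by metis
    then have "x / y \<in> squares_of_field" using coset_eq[OF grp_sq xy(1,2)] by simp
    then obtain w where "x / y = w * w" unfolding squares_of_field_def by auto
    then have "x = y * w * w" using xy by (simp add: field_simps)
    then show "p = q" using xy cls_eq by metis
  qed
  show "range (rho :: 'a sq \<Rightarrow> _) = quot units_of_field squares_of_field"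
  proof (intro Set.set_eqI iffI)
    fix A assume "A \<in> range rho"
    then obtain p where "A = rho p" by blast
    moreover obtain x where "x \<noteq> 0" "p = cls x" using sq_cases by blast
    ultimately show "A \<in> quot units_of_field squares_of_field"
      unfolding quot_def units_of_field_def using rho_cls by auto
  next
    fix A assume "A \<in> quot units_of_field squares_of_field"
    then obtain x where "x \<noteq> 0" "A = x *o squares_of_field" unfolding quot_def units_of_field_def by auto
    then show "A \<in> range rho" using rho_cls by (metis rangeI)
  qed
qed

lemma rho_sigma:
  assumes m: "mhom \<sigma>" and b: "bij \<sigma>" and z: "\<sigma> 0 = 0"
  shows "rho (sqmap \<sigma> q) = \<sigma> ` rho (q::'a::field sq)"
proof -
  obtain x where x: "x \<noteq> 0" "q = cls x" using sq_cases by blast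
  have sx: "\<sigma> x \<noteq> 0" using m x unfolding mhom_def by blast
  have "rho (sqmap \<sigma> q) = \<sigma> x *o squares_of_field" using x sx by (simp add: sqmap_cls[OF m] rho_cls)
  also have "\<dots> = \<sigma> ` (x *o squares_of_field)"
  proof (intro Set.set_eqI iffI)
    fix y assume "y \<in> \<sigma> x *o squares_of_field"
    then obtain v where v: "v \<noteq> 0" "y = \<sigma> x * (v * v)" unfolding elt_set_times_def squares_of_field_def by auto
    obtain w where w: "v = \<sigma> w" using b by (metis bij_pointE)
    then have "w \<noteq> 0" using v z by auto
    then have "x * (w * w) \<in> x *o squares_of_field" unfolding elt_set_times_def squares_of_field_def by blast
    moreover have "\<sigma> (x * (w * w)) = y" using m v w unfolding mhom_def by simp
    ultimately show "y \<in> \<sigma> ` (x *o squares_of_field)" by blast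
  next
    fix y assume "y \<in> \<sigma> ` (x *o squares_of_field)"
    then obtain w where w: "w \<noteq> 0" "y = \<sigma> (x * (w * w))" unfolding elt_set_times_def squares_of_field_def by auto
    then have "y = \<sigma> x * (\<sigma> w * \<sigma> w)" "\<sigma> w \<noteq> 0" using m unfolding mhom_def by auto
    then show "y \<in> \<sigma> x *o squares_of_field" unfolding elt_set_times_def squares_of_field_def by blast
  qed
  finally show ?thesis using x by (simp add: rho_cls)
qed

lemma tmod_bridge:
  assumes m1: "mhom \<sigma>1" "bij \<sigma>1" "\<sigma>1 0 = 0" and m2: "mhom \<sigma>2" "bij \<sigma>2" "\<sigma>2 0 = 0"
  shows "T_mod_iso (\<sigma>1 :: 'k::field \<Rightarrow> 'k) (\<sigma>2 :: 'l::field \<Rightarrow> 'l) \<longleftrightarrow>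
     (\<exists>\<phi>. Vector_Spaces.linear sc sc \<phi> \<and> bij \<phi> \<and> (\<forall>q. \<phi> (sqmap \<sigma>1 q) = sqmap \<sigma>2 (\<phi> q)))"
proof
  let ?Q1 = "quot (units_of_field::'k set) squares_of_field"
  let ?Q2 = "quot (units_of_field::'l set) squares_of_field"
  have r1: "bij_betw (rho :: 'k sq \<Rightarrow> _) UNIV ?Q1" by (rule rho_bij)
  have r2: "bij_betw (rho :: 'l sq \<Rightarrow> _) UNIV ?Q2" by (rule rho_bij)
  have inj2: "inj (rho :: 'l sq \<Rightarrow> _)" using r2 bij_betw_imp_inj_on by blast
  {
    assume "T_mod_iso \<sigma>1 \<sigma>2"
    then obtain f where f: "bij_betw f ?Q1 ?Q2" "\<forall>A\<in>?Q1. \<forall>B\<in>?Q1. f (A * B) = f A * f B"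
      "\<forall>A\<in>?Q1. f (\<sigma>1 ` A) = \<sigma>2 ` f A" unfolding T_mod_iso_def by blast
    define \<phi> where "\<phi> q = inv_into UNIV (rho :: 'l sq \<Rightarrow> _) (f (rho q))" for q :: "'k sq"
    have in1: "rho q \<in> ?Q1" for q :: "'k sq" using r1 bij_betwE by blast
    have fin: "f (rho q) \<in> ?Q2" for q :: "'k sq" using f(1) in1 bij_betwE by blast
    have rphi: "rho (\<phi> q) = f (rho q)" for q
      unfolding \<phi>_def using fin r2 by (simp add: bij_betw_def f_inv_into_f)
    have bphi: "bij \<phi>"
    proof -
      have "bij_betw (\<lambda>q. f (rho q)) UNIV ?Q2" using bij_betw_trans[OF r1 f(1)] by (simp add: comp_def)
      then have "bij_betw (inv_into UNIV rho \<circ> (\<lambda>q. f (rho q))) UNIV UNIV"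
        using bij_betw_trans bij_betw_inv_into[OF r2] by blast
      then show ?thesis unfolding \<phi>_def by (simp add: comp_def)
    qed
    have "\<phi> (p + q) = \<phi> p + \<phi> q" for p q
    proof -
      have "rho (\<phi> (p + q)) = f (rho p * rho q)" using rphi rho_add by metis
      also have "\<dots> = f (rho p) * f (rho q)" using f(2) in1 by blast
      also have "\<dots> = rho (\<phi> p + \<phi> q)" using rphi rho_add by metis
      finally show ?thesis using inj2 by (simp add: inj_eq)
    qed
    then have lphi: "Vector_Spaces.linear sc sc \<phi>" by (simp add: lin_iff)
    have "\<phi> (sqmap \<sigma>1 q) = sqmap \<sigma>2 (\<phi> q)" for q
    proof -
      have "rho (\<phi> (sqmap \<sigma>1 q)) = f (\<sigma>1 ` rho q)" using rphi rho_sigma[OF m1] by metis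
      also have "\<dots> = \<sigma>2 ` f (rho q)" using f(3) in1 by blast
      also have "\<dots> = rho (sqmap \<sigma>2 (\<phi> q))" using rphi rho_sigma[OF m2] by metis
      finally show ?thesis using inj2 by (simp add: inj_eq)
    qed
    then show "\<exists>\<phi>. Vector_Spaces.linear sc sc \<phi> \<and> bij \<phi> \<and> (\<forall>q. \<phi> (sqmap \<sigma>1 q) = sqmap \<sigma>2 (\<phi> q))"
      using lphi bphi by blast
  }
  {
    assume "\<exists>\<phi>. Vector_Spaces.linear sc sc \<phi> \<and> bij \<phi> \<and> (\<forall>q. \<phi> (sqmap \<sigma>1 q) = sqmap \<sigma>2 (\<phi> q))"
    then obtain \<phi> :: "'k sq \<Rightarrow> 'l sq" where \<phi>: "Vector_Spaces.linear sc sc \<phi>" "bij \<phi>"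
      "\<And>q. \<phi> (sqmap \<sigma>1 q) = sqmap \<sigma>2 (\<phi> q)" by blast
    define f where "f A = rho (\<phi> (inv_into UNIV (rho :: 'k sq \<Rightarrow> _) A))" for A
    have fr: "f (rho q) = rho (\<phi> q)" for q :: "'k sq"
      unfolding f_def using r1 by (simp add: bij_betw_def)
    have "bij_betw f ?Q1 ?Q2"
    proof -
      have "bij_betw (rho \<circ> \<phi>) UNIV ?Q2" using bij_betw_trans[OF \<phi>(2) r2] .
      then have "bij_betw ((rho \<circ> \<phi>) \<circ> inv_into UNIV rho) ?Q1 ?Q2"
        using bij_betw_trans[OF bij_betw_inv_into[OF r1]] by blast
      then show ?thesis unfolding f_def by (simp add: comp_def)
    qed
    moreover have "\<forall>A\<in>?Q1. \<forall>B\<in>?Q1. f (A * B) = f A * f B"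
    proof (intro ballI)
      fix A B assume "A \<in> ?Q1" "B \<in> ?Q1"
      then obtain p q where "A = rho p" "B = rho q" using r1 by (metis bij_betw_def imageE)
      then show "f (A * B) = f A * f B" using fr rho_add lin_add[OF \<phi>(1)] by metis
    qed
    moreover have "\<forall>A\<in>?Q1. f (\<sigma>1 ` A) = \<sigma>2 ` f A"
    proof
      fix A assume "A \<in> ?Q1"
      then obtain p where "A = rho p" using r1 by (metis bij_betw_def imageE)
      then show "f (\<sigma>1 ` A) = \<sigma>2 ` f A" using fr rho_sigma[OF m1] rho_sigma[OF m2] \<phi>(3) by metis
    qed
    ultimately show "T_mod_iso \<sigma>1 \<sigma>2" unfolding T_mod_iso_def by blast
  }
qed

lemma qe_grpN: assumes "qe \<iota> a r \<sigma>" shows "grp (norm_group \<iota> \<sigma>)" "norm_group \<iota> \<sigma> \<subseteq> units_of_field"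
  "squares_of_field \<subseteq> norm_group \<iota> \<sigma>"
proof -
  interpret q: qe \<iota> a r \<sigma> by (rule assms)
  show "grp (norm_group \<iota> \<sigma>)" unfolding grp_def q.Nset_def[symmetric]
    using q.N_nz q.N_1 q.N_mult q.N_inv by blast
  show "norm_group \<iota> \<sigma> \<subseteq> units_of_field" unfolding units_of_field_def q.Nset_def[symmetric]
    using q.N_nz by blast
  show "squares_of_field \<subseteq> norm_group \<iota> \<sigma>" unfolding squares_of_field_def q.Nset_def[symmetric]
    using q.N_sq by blast
qed

lemma cls_units: "cls ` (units_of_field :: 'a::field set) = UNIV"
proof (intro Set.set_eqI iffI)
  fix q :: "'a sq"
  obtain x where "x \<noteq> 0" "q = cls x" using sq_cases by blast
  then show "q \<in> cls ` units_of_field" unfolding units_of_field_def by blast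
qed simp

lemma cls_squares: "cls ` (squares_of_field :: 'a::field set) = {0}"
proof
  show "cls ` squares_of_field \<subseteq> {0::'a sq}"
  proof
    fix q assume "q \<in> cls ` (squares_of_field :: 'a set)"
    then obtain w :: 'a where w: "w \<noteq> 0" "q = cls (w * w)" unfolding squares_of_field_def by blast
    then have "w * w \<noteq> 0" by simp
    then show "q \<in> {0}" using cls_eq0[of "w * w"] w by auto
  qed
  have "(1::'a) \<in> squares_of_field" unfolding squares_of_field_def by (auto intro!: exI[of _ 1])
  then show "{0::'a sq} \<subseteq> cls ` squares_of_field" using cls_1 by (metis empty_subsetI image_eqI insert_subset)
qed

lemma qe_facts:
  fixes \<iota> :: "'a::field \<Rightarrow> 'k::field"
  assumes "qe \<iota> a r \<sigma>"
  shows "\<exists>(Bn::'a sq set) (Dq::'a sq set) (Bf::'k sq set) (C::'k sq set).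
    is_inv (\<lambda>q. sqmap \<sigma> q + q) Bf C \<and> Bn \<approx> {..<Upsilon \<iota> \<sigma>} <+> Bf \<and>
    {..<1::nat} <+> C \<approx> {..<2 * Upsilon \<iota> \<sigma>} <+> Dq \<and>
    (\<exists>B. F2_basis (norm_group \<iota> \<sigma>) (quot units_of_field (norm_group \<iota> \<sigma>)) B) \<and>
    (\<forall>B. F2_basis (norm_group \<iota> \<sigma>) (quot units_of_field (norm_group \<iota> \<sigma>)) B \<longrightarrow> B \<approx> Dq) \<and>
    (\<exists>B. F2_basis squares_of_field (quot (norm_group \<iota> \<sigma>) squares_of_field) B) \<and>
    (\<forall>B. F2_basis squares_of_field (quot (norm_group \<iota> \<sigma>) squares_of_field) B \<longrightarrow> B \<approx> Bn)"
proof -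
  interpret q: qe \<iota> a r \<sigma> by (rule assms)
  obtain Bn Dq Bf C where I: "f2.independent (Bn \<union> Dq)" "Bn \<inter> Dq = {}" "f2.span Bn = q.NQ"
    "f2.span (Bn \<union> Dq) = UNIV" "is_inv q.s Bf C" "Bn \<approx> {..<Upsilon \<iota> \<sigma>} <+> Bf"
    "{..<1::nat} <+> C \<approx> {..<2 * Upsilon \<iota> \<sigma>} <+> Dq"
    using q.invariants by blast
  note g = qe_grpN[OF assms]
  have NQ: "q.NQ = cls ` norm_group \<iota> \<sigma>" unfolding q.NQ_def q.Nset_def ..
  have QA: "(\<exists>B. F2_basis (norm_group \<iota> \<sigma>) (quot units_of_field (norm_group \<iota> \<sigma>)) B) \<and>
    (\<forall>B. F2_basis (norm_group \<iota> \<sigma>) (quot units_of_field (norm_group \<iota> \<sigma>)) B \<longrightarrow> B \<approx> Dq)"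
    by (rule quot_basis[OF grp_units g(1) g(2) g(3) I(1) I(2)]) (use I(3,4) NQ cls_units in auto)
  have QB: "(\<exists>B. F2_basis squares_of_field (quot (norm_group \<iota> \<sigma>) squares_of_field) B) \<and>
    (\<forall>B. F2_basis squares_of_field (quot (norm_group \<iota> \<sigma>) squares_of_field) B \<longrightarrow> B \<approx> Bn)"
  proof (rule quot_basis[OF g(1) grp_sq g(3) subset_refl, of "{}" Bn])
    show "f2.independent ({} \<union> Bn)" using I(1) f2.independent_mono by fastforce
    show "{} \<inter> Bn = {}" by simp
    show "f2.span {} = cls ` squares_of_field" using cls_squares by (metis f2.span_empty)
    show "f2.span ({} \<union> Bn) = cls ` norm_group \<iota> \<sigma>" using I(3) NQ by simp
  qed
  have sdef: "q.s = (\<lambda>q. sqmap \<sigma> q + q)" by (rule ext) (simp add: q.s_def q.Sg_def)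
  show ?thesis using I(5)[unfolded sdef] I(6) I(7) QA QB by blast
qed

theorem corollary3:
  fixes \<iota>1 :: "'a::field \<Rightarrow> 'k::field" and a1 :: 'a and r1 :: 'k and \<sigma>1 :: "'k \<Rightarrow> 'k"
    and \<iota>2 :: "'b::field \<Rightarrow> 'l::field" and a2 :: 'b and r2 :: 'l and \<sigma>2 :: "'l \<Rightarrow> 'l"
  assumes char1: "(2::'a) \<noteq> 0" and char2: "(2::'b) \<noteq> 0"
    and a1: "a1 \<noteq> 0" "a1 \<notin> squares_of_field"
    and a2: "a2 \<noteq> 0" "a2 \<notin> squares_of_field"
    and K1: "quad_ext \<iota>1 a1 r1" and K2: "quad_ext \<iota>2 a2 r2"
    and G1: "gal_generator \<iota>1 \<sigma>1" and G2: "gal_generator \<iota>2 \<sigma>2"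
  shows "T_mod_iso \<sigma>1 \<sigma>2 \<longleftrightarrow>
    (\<forall>B1 B2 C1 C2.
       F2_basis (norm_group \<iota>1 \<sigma>1) (quot units_of_field (norm_group \<iota>1 \<sigma>1)) B1 \<longrightarrow>
       F2_basis (norm_group \<iota>2 \<sigma>2) (quot units_of_field (norm_group \<iota>2 \<sigma>2)) B2 \<longrightarrow>
       F2_basis squares_of_field (quot (norm_group \<iota>1 \<sigma>1) squares_of_field) C1 \<longrightarrow>
       F2_basis squares_of_field (quot (norm_group \<iota>2 \<sigma>2) squares_of_field) C2 \<longrightarrow>
       ({..<2 * Upsilon \<iota>1 \<sigma>1} <+> B1) \<approx> ({..<2 * Upsilon \<iota>2 \<sigma>2} <+> B2) \<and>
       ({..<Upsilon \<iota>2 \<sigma>2} <+> C1) \<approx> ({..<Upsilon \<iota>1 \<sigma>1} <+> C2))"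
proof -
  have qe1: "qe \<iota>1 a1 r1 \<sigma>1" unfolding qe_def using char1 a1 K1 G1 by blast
  have qe2: "qe \<iota>2 a2 r2 \<sigma>2" unfolding qe_def using char2 a2 K2 G2 by blast
  interpret q1: qe \<iota>1 a1 r1 \<sigma>1 by (rule qe1)
  interpret q2: qe \<iota>2 a2 r2 \<sigma>2 by (rule qe2)
  have sd1: "q1.s = (\<lambda>q. sqmap \<sigma>1 q + q)" by (rule ext) (simp add: q1.s_def q1.Sg_def)
  have sd2: "q2.s = (\<lambda>q. sqmap \<sigma>2 q + q)" by (rule ext) (simp add: q2.s_def q2.Sg_def)
  obtain Bn1 Dq1 :: "'a sq set" and Bf1 Cc1 :: "'k sq set" where F1: "is_inv q1.s Bf1 Cc1" "Bn1 \<approx> {..<Upsilon \<iota>1 \<sigma>1} <+> Bf1"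
    "{..<1::nat} <+> Cc1 \<approx> {..<2 * Upsilon \<iota>1 \<sigma>1} <+> Dq1"
    "(\<exists>B. F2_basis (norm_group \<iota>1 \<sigma>1) (quot units_of_field (norm_group \<iota>1 \<sigma>1)) B)"
    "(\<forall>B. F2_basis (norm_group \<iota>1 \<sigma>1) (quot units_of_field (norm_group \<iota>1 \<sigma>1)) B \<longrightarrow> B \<approx> Dq1)"
    "(\<exists>B. F2_basis squares_of_field (quot (norm_group \<iota>1 \<sigma>1) squares_of_field) B)"
    "(\<forall>B. F2_basis squares_of_field (quot (norm_group \<iota>1 \<sigma>1) squares_of_field) B \<longrightarrow> B \<approx> Bn1)"
    using qe_facts[OF qe1] unfolding sd1 by blast
  obtain Bn2 Dq2 :: "'b sq set" and Bf2 Cc2 :: "'l sq set" where F2: "is_inv q2.s Bf2 Cc2" "Bn2 \<approx> {..<Upsilon \<iota>2 \<sigma>2} <+> Bf2"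
    "{..<1::nat} <+> Cc2 \<approx> {..<2 * Upsilon \<iota>2 \<sigma>2} <+> Dq2"
    "(\<exists>B. F2_basis (norm_group \<iota>2 \<sigma>2) (quot units_of_field (norm_group \<iota>2 \<sigma>2)) B)"
    "(\<forall>B. F2_basis (norm_group \<iota>2 \<sigma>2) (quot units_of_field (norm_group \<iota>2 \<sigma>2)) B \<longrightarrow> B \<approx> Dq2)"
    "(\<exists>B. F2_basis squares_of_field (quot (norm_group \<iota>2 \<sigma>2) squares_of_field) B)"
    "(\<forall>B. F2_basis squares_of_field (quot (norm_group \<iota>2 \<sigma>2) squares_of_field) B \<longrightarrow> B \<approx> Bn2)"
    using qe_facts[OF qe2] unfolding sd2 by blast
  define u1 where "u1 = Upsilon \<iota>1 \<sigma>1"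
  define u2 where "u2 = Upsilon \<iota>2 \<sigma>2"
  have iso: "T_mod_iso \<sigma>1 \<sigma>2 \<longleftrightarrow> Bf1 \<approx> Bf2 \<and> Cc1 \<approx> Cc2"
  proof -
    have "T_mod_iso \<sigma>1 \<sigma>2 \<longleftrightarrow>
       (\<exists>\<phi>. Vector_Spaces.linear sc sc \<phi> \<and> bij \<phi> \<and> (\<forall>q. \<phi> (sqmap \<sigma>1 q) = sqmap \<sigma>2 (\<phi> q)))"
      by (rule tmod_bridge[OF q1.mhom_s q1.s_bij q1.s_0 q2.mhom_s q2.s_bij q2.s_0])
    also have "\<dots> \<longleftrightarrow> (\<exists>\<phi>. Vector_Spaces.linear sc sc \<phi> \<and> bij \<phi> \<and> (\<forall>x. \<phi> (q1.s x) = q2.s (\<phi> x)))"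
    proof -
      have "(\<forall>q. \<phi> (sqmap \<sigma>1 q) = sqmap \<sigma>2 (\<phi> q)) \<longleftrightarrow> (\<forall>x. \<phi> (q1.s x) = q2.s (\<phi> x))"
        if l: "Vector_Spaces.linear sc sc \<phi>" for \<phi>
        unfolding q1.s_def q2.s_def q1.Sg_def q2.Sg_def using lin_add[OF l] by simp
      then show ?thesis by blast
    qed
    also have "\<dots> \<longleftrightarrow> Bf1 \<approx> Bf2 \<and> Cc1 \<approx> Cc2" by (rule struct_iff[OF q1.lin_s q2.lin_s F1(1) F2(1)])
    finally show ?thesis .
  qed
  have E1: "{..<2 * u1} <+> Dq1 \<approx> {..<2 * u2} <+> Dq2 \<longleftrightarrow> Cc1 \<approx> Cc2"
  proof
    assume h: "{..<2 * u1} <+> Dq1 \<approx> {..<2 * u2} <+> Dq2"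
    have "{..<1::nat} <+> Cc1 \<approx> {..<1::nat} <+> Cc2"
      using F1(3) h F2(3) eqpoll_sym eqpoll_trans unfolding u1_def u2_def by metis
    then show "Cc1 \<approx> Cc2" by (rule plus_cancel)
  next
    assume "Cc1 \<approx> Cc2"
    then have "{..<1::nat} <+> Cc1 \<approx> {..<1::nat} <+> Cc2" by (rule plus_cong_right)
    then show "{..<2 * u1} <+> Dq1 \<approx> {..<2 * u2} <+> Dq2"
      using F1(3) F2(3) eqpoll_sym eqpoll_trans unfolding u1_def u2_def by metis
  qed
  have E2: "{..<u2} <+> Bn1 \<approx> {..<u1} <+> Bn2 \<longleftrightarrow> Bf1 \<approx> Bf2"
  proof -
    have x1: "{..<u2} <+> Bn1 \<approx> {..<u1 + u2} <+> Bf1"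
    proof -
      have "{..<u2} <+> Bn1 \<approx> {..<u2} <+> ({..<u1} <+> Bf1)" using F1(2) plus_cong_right u1_def by blast
      also have "\<dots> \<approx> {..<u2 + u1} <+> Bf1" by (rule plus_nat_assoc)
      finally show ?thesis by (simp add: add.commute)
    qed
    have x2: "{..<u1} <+> Bn2 \<approx> {..<u1 + u2} <+> Bf2"
    proof -
      have "{..<u1} <+> Bn2 \<approx> {..<u1} <+> ({..<u2} <+> Bf2)" using F2(2) plus_cong_right u2_def by blast
      also have "\<dots> \<approx> {..<u1 + u2} <+> Bf2" by (rule plus_nat_assoc)
      finally show ?thesis .
    qed
    show ?thesis
    proof
      assume "{..<u2} <+> Bn1 \<approx> {..<u1} <+> Bn2"
      then have "{..<u1 + u2} <+> Bf1 \<approx> {..<u1 + u2} <+> Bf2" using x1 x2 eqpoll_sym eqpoll_trans by metis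
      then show "Bf1 \<approx> Bf2" by (rule plus_cancel)
    next
      assume "Bf1 \<approx> Bf2"
      then have "{..<u1 + u2} <+> Bf1 \<approx> {..<u1 + u2} <+> Bf2" by (rule plus_cong_right)
      then show "{..<u2} <+> Bn1 \<approx> {..<u1} <+> Bn2" using x1 x2 eqpoll_sym eqpoll_trans by metis
    qed
  qed
  let ?R = "\<forall>B1 B2 C1 C2.
       F2_basis (norm_group \<iota>1 \<sigma>1) (quot units_of_field (norm_group \<iota>1 \<sigma>1)) B1 \<longrightarrow>
       F2_basis (norm_group \<iota>2 \<sigma>2) (quot units_of_field (norm_group \<iota>2 \<sigma>2)) B2 \<longrightarrow>
       F2_basis squares_of_field (quot (norm_group \<iota>1 \<sigma>1) squares_of_field) C1 \<longrightarrow>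
       F2_basis squares_of_field (quot (norm_group \<iota>2 \<sigma>2) squares_of_field) C2 \<longrightarrow>
       ({..<2 * Upsilon \<iota>1 \<sigma>1} <+> B1) \<approx> ({..<2 * Upsilon \<iota>2 \<sigma>2} <+> B2) \<and>
       ({..<Upsilon \<iota>2 \<sigma>2} <+> C1) \<approx> ({..<Upsilon \<iota>1 \<sigma>1} <+> C2)"
  have R: "?R \<longleftrightarrow> ({..<2 * u1} <+> Dq1 \<approx> {..<2 * u2} <+> Dq2) \<and> ({..<u2} <+> Bn1 \<approx> {..<u1} <+> Bn2)"
  proof
    assume r: ?R
    obtain B1 where B1: "F2_basis (norm_group \<iota>1 \<sigma>1) (quot units_of_field (norm_group \<iota>1 \<sigma>1)) B1"
      using F1(4) by blast
    obtain B2 where B2: "F2_basis (norm_group \<iota>2 \<sigma>2) (quot units_of_field (norm_group \<iota>2 \<sigma>2)) B2"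
      using F2(4) by blast
    obtain C1 where C1: "F2_basis squares_of_field (quot (norm_group \<iota>1 \<sigma>1) squares_of_field) C1"
      using F1(6) by blast
    obtain C2 where C2: "F2_basis squares_of_field (quot (norm_group \<iota>2 \<sigma>2) squares_of_field) C2"
      using F2(6) by blast
    have e: "B1 \<approx> Dq1" "B2 \<approx> Dq2" "C1 \<approx> Bn1" "C2 \<approx> Bn2" using F1(5,7) F2(5,7) B1 B2 C1 C2 by blast+
    have h1: "{..<2 * u1} <+> B1 \<approx> {..<2 * u2} <+> B2" and h2: "{..<u2} <+> C1 \<approx> {..<u1} <+> C2"
      using r B1 B2 C1 C2 unfolding u1_def u2_def by blast+
    have "{..<2 * u1} <+> Dq1 \<approx> {..<2 * u2} <+> Dq2"
      using h1 plus_cong_right[OF e(1), of "{..<2 * u1}"] plus_cong_right[OF e(2), of "{..<2 * u2}"]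
        eqpoll_sym eqpoll_trans by metis
    moreover have "{..<u2} <+> Bn1 \<approx> {..<u1} <+> Bn2"
      using h2 plus_cong_right[OF e(3), of "{..<u2}"] plus_cong_right[OF e(4), of "{..<u1}"]
        eqpoll_sym eqpoll_trans by metis
    ultimately show "({..<2 * u1} <+> Dq1 \<approx> {..<2 * u2} <+> Dq2) \<and> ({..<u2} <+> Bn1 \<approx> {..<u1} <+> Bn2)" ..
  next
    assume h: "({..<2 * u1} <+> Dq1 \<approx> {..<2 * u2} <+> Dq2) \<and> ({..<u2} <+> Bn1 \<approx> {..<u1} <+> Bn2)"
    show ?R
    proof (intro allI impI)
      fix B1 B2 C1 C2
      assume B1: "F2_basis (norm_group \<iota>1 \<sigma>1) (quot units_of_field (norm_group \<iota>1 \<sigma>1)) B1"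
        and B2: "F2_basis (norm_group \<iota>2 \<sigma>2) (quot units_of_field (norm_group \<iota>2 \<sigma>2)) B2"
        and C1: "F2_basis squares_of_field (quot (norm_group \<iota>1 \<sigma>1) squares_of_field) C1"
        and C2: "F2_basis squares_of_field (quot (norm_group \<iota>2 \<sigma>2) squares_of_field) C2"
      have e: "B1 \<approx> Dq1" "B2 \<approx> Dq2" "C1 \<approx> Bn1" "C2 \<approx> Bn2" using F1(5,7) F2(5,7) B1 B2 C1 C2 by blast+
      have "{..<2 * u1} <+> B1 \<approx> {..<2 * u2} <+> B2"
        using h plus_cong_right[OF e(1), of "{..<2 * u1}"] plus_cong_right[OF e(2), of "{..<2 * u2}"]
          eqpoll_sym eqpoll_trans by metis
      moreover have "{..<u2} <+> C1 \<approx> {..<u1} <+> C2"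
        using h plus_cong_right[OF e(3), of "{..<u2}"] plus_cong_right[OF e(4), of "{..<u1}"]
          eqpoll_sym eqpoll_trans by metis
      ultimately show "({..<2 * Upsilon \<iota>1 \<sigma>1} <+> B1) \<approx> ({..<2 * Upsilon \<iota>2 \<sigma>2} <+> B2) \<and>
         ({..<Upsilon \<iota>2 \<sigma>2} <+> C1) \<approx> ({..<Upsilon \<iota>1 \<sigma>1} <+> C2)" unfolding u1_def u2_def ..
    qed
  qed
  show ?thesis using iso E1 E2 R by blast
qed

end
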